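(* Let $p\in(0,1/2]$ be a fixed constant. There exist constants $C,c,\delta,\rho\in(0,1)$ depending only on $p$ such that the following holds for all sufficiently large positive integers $d,n$ with $d=pn$. Let $m$ be an integer with $n/2\le m\le n$ and let $M$ be a random $m\times n$ matrix whose rows are independent random vectors, each drawn uniformly from the set of vectors in $\{0,1\}^n$ with exactly $d$ ones. Then \[ \mathbb{P}\left(\inf_{v\in \mathrm{Cons}_{\delta,\rho}}\|Mv\|_2\le c\sqrt{pn}\right)\le e^{-Cn}. \]
   Context: $\mathbb{S}^{n-1}$ is the Euclidean unit sphere in $\mathbb{R}^n$. For $\delta,\rho\in(0,1)$, $\mathrm{Cons}_{\delta,\rho}\subset\mathbb{S}^{n-1}$ ("almost constant vectors") is the set of $v\in\mathbb{S}^{n-1}$ for which there exists a real number $\lambda$ such that $|v_i-\lambda|\le \rho/\sqrt{n}$ holds for at least $(1-\delta)n$ coordinates $i\in\{1,\dots,n\}$. *)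

theory Defs
  imports "HOL-Probability.Probability"
begin

text \<open>Vectors in R^n are represented as functions nat => real that vanish outside {0..<n}.\<close>

definition unit_sphere :: "nat \<Rightarrow> (nat \<Rightarrow> real) set" where
  "unit_sphere n = {v. (\<forall>i\<ge>n. v i = 0) \<and> sqrt (\<Sum>i<n. (v i)\<^sup>2) = 1}"

definition almost_const :: "real \<Rightarrow> real \<Rightarrow> nat \<Rightarrow> (nat \<Rightarrow> real) set" where
  "almost_const \<delta> \<rho> n = {v \<in> unit_sphere n. \<exists>lam::real.
      real (card {i. i < n \<and> \<bar>v i - lam\<bar> \<le> \<rho> / sqrt (real n)}) \<ge> (1 - \<delta>) * real n}"

definition slice_vectors :: "nat \<Rightarrow> nat \<Rightarrow> (nat \<Rightarrow> real) set" where
  "slice_vectors n d = {x. (\<forall>i. x i \<in> {0, 1}) \<and> (\<forall>i\<ge>n. x i = 0) \<and>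
      card {i. i < n \<and> x i = 1} = d}"

text \<open>m x n matrices (as row functions) whose rows lie in slice_vectors n d;
  the uniform distribution on this product set is the law of a matrix with
  independent rows, each uniform on slice_vectors n d.\<close>
definition slice_matrices :: "nat \<Rightarrow> nat \<Rightarrow> nat \<Rightarrow> (nat \<Rightarrow> nat \<Rightarrow> real) set" where
  "slice_matrices m n d = (\<Pi>\<^sub>E i\<in>{..<m}. slice_vectors n d)"

definition random_slice_matrix :: "nat \<Rightarrow> nat \<Rightarrow> nat \<Rightarrow> (nat \<Rightarrow> nat \<Rightarrow> real) pmf" where
  "random_slice_matrix m n d = pmf_of_set (slice_matrices m n d)"

definition matvec_norm :: "nat \<Rightarrow> nat \<Rightarrow> (nat \<Rightarrow> nat \<Rightarrow> real) \<Rightarrow> (nat \<Rightarrow> real) \<Rightarrow> real" where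
  "matvec_norm m n M v = sqrt (\<Sum>i<m. (\<Sum>j<n. M i j * v j)\<^sup>2)"

end

theory Submission
  imports Defs
begin


definition indv :: "nat set \<Rightarrow> nat \<Rightarrow> real" where
  "indv A j = (if j \<in> A then 1 else 0)"

definition subs :: "nat \<Rightarrow> nat \<Rightarrow> nat set set" where
  "subs n d = {A. A \<subseteq> {..<n} \<and> card A = d}"

lemma inj_indv: "inj indv"
proof (rule injI)
  fix A B assume "indv A = indv B"
  then have "\<And>j. indv A j = indv B j" by simp
  then show "A = B" unfolding indv_def by (auto split: if_splits) (metis zero_neq_one)+
qed

lemma slice_eq: "slice_vectors n d = indv ` subs n d"
proof
  show "slice_vectors n d \<subseteq> indv ` subs n d"
  proof
    fix x assume x: "x \<in> slice_vectors n d"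
    let ?A = "{i. i < n \<and> x i = 1}"
    have "x = indv ?A"
    proof
      fix j show "x j = indv ?A j"
        using x unfolding slice_vectors_def indv_def
        by (cases "j < n") auto
    qed
    moreover have "?A \<in> subs n d" using x unfolding slice_vectors_def subs_def by auto
    ultimately show "x \<in> indv ` subs n d" by blast
  qed
next
  show "indv ` subs n d \<subseteq> slice_vectors n d"
  proof
    fix x assume "x \<in> indv ` subs n d"
    then obtain A where A: "A \<subseteq> {..<n}" "card A = d" and xA: "x = indv A"
      unfolding subs_def by auto
    have "{i. i < n \<and> indv A i = 1} = A" using A(1) unfolding indv_def by auto
    then show "x \<in> slice_vectors n d" using A xA unfolding slice_vectors_def indv_def
      by auto
  qed
qed

lemma finite_subs: "finite (subs n d)"
  unfolding subs_def by (rule finite_subset[of _ "Pow {..<n}"]) auto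

lemma card_subs: "card (subs n d) = n choose d"
  unfolding subs_def using n_subsets[of "{..<n}" d] by simp

lemma finite_slice: "finite (slice_vectors n d)"
  using finite_subs slice_eq by simp

lemma card_slice: "card (slice_vectors n d) = n choose d"
  unfolding slice_eq using card_subs card_image inj_on_subset[OF inj_indv] by (metis subset_UNIV)

lemma sum_slice: "(\<Sum>x\<in>slice_vectors n d. f x) = (\<Sum>A\<in>subs n d. f (indv A))"
  unfolding slice_eq by (rule sum.reindex[unfolded comp_def]) (meson inj_indv inj_on_subset subset_UNIV)

lemma slice_nonempty: "d \<le> n \<Longrightarrow> slice_vectors n d \<noteq> {}"
  using card_slice[of n d] by (metis binomial_eq_0_iff card.empty not_le)

lemma slice_vals: "x \<in> slice_vectors n d \<Longrightarrow> x j = 0 \<or> x j = 1"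
  unfolding slice_vectors_def by auto

lemma slice_out: "x \<in> slice_vectors n d \<Longrightarrow> n \<le> j \<Longrightarrow> x j = 0"
  unfolding slice_vectors_def by auto

lemma slice_rowsum: assumes "x \<in> slice_vectors n d" shows "(\<Sum>j<n. x j) = real d"
proof -
  obtain A where A: "A \<in> subs n d" "x = indv A" using assms slice_eq by auto
  have "(\<Sum>j<n. indv A j) = (\<Sum>j\<in>A. 1)"
    using A(1) unfolding subs_def indv_def by (simp add: sum.If_cases Int_absorb1)
  then show ?thesis using A unfolding subs_def by simp
qed

lemma card_subs_sup:
  assumes T: "T \<subseteq> {..<n}" "card T \<le> d"
  shows "card {A \<in> subs n d. T \<subseteq> A} = (n - card T) choose (d - card T)"
proof -
  have fT: "finite T" using T finite_subset by blast
  have bij: "bij_betw (\<lambda>A. A - T) {A \<in> subs n d. T \<subseteq> A} {B. B \<subseteq> {..<n} - T \<and> card B = d - card T}"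
  proof (rule bij_betw_byWitness[where f' = "\<lambda>B. B \<union> T"])
    show "\<forall>a\<in>{A \<in> subs n d. T \<subseteq> A}. a - T \<union> T = a" by auto
    show "\<forall>a'\<in>{B. B \<subseteq> {..<n} - T \<and> card B = d - card T}. a' \<union> T - T = a'" by auto
    show "(\<lambda>A. A - T) ` {A \<in> subs n d. T \<subseteq> A} \<subseteq> {B. B \<subseteq> {..<n} - T \<and> card B = d - card T}"
    proof
      fix B assume "B \<in> (\<lambda>A. A - T) ` {A \<in> subs n d. T \<subseteq> A}"
      then obtain A where A: "A \<subseteq> {..<n}" "card A = d" "T \<subseteq> A" "B = A - T" unfolding subs_def by auto
      have "finite A" using A(1) finite_subset by blast
      then have "card (A - T) = d - card T" using A card_Diff_subset fT by auto
      then show "B \<in> {B. B \<subseteq> {..<n} - T \<and> card B = d - card T}" using A by auto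
    qed
    show "(\<lambda>B. B \<union> T) ` {B. B \<subseteq> {..<n} - T \<and> card B = d - card T} \<subseteq> {A \<in> subs n d. T \<subseteq> A}"
    proof
      fix A assume "A \<in> (\<lambda>B. B \<union> T) ` {B. B \<subseteq> {..<n} - T \<and> card B = d - card T}"
      then obtain B where B: "B \<subseteq> {..<n} - T" "card B = d - card T" "A = B \<union> T" by auto
      have "finite B" using B(1) finite_subset by blast
      then have "card A = d" using B T fT card_Un_disjoint[of B T] by auto
      then show "A \<in> {A \<in> subs n d. T \<subseteq> A}" using B T unfolding subs_def by auto
    qed
  qed
  have "card {A \<in> subs n d. T \<subseteq> A} = card {B. B \<subseteq> {..<n} - T \<and> card B = d - card T}"
    using bij bij_betw_same_card by blast
  also have "\<dots> = card ({..<n} - T) choose (d - card T)" by (rule n_subsets) simp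
  also have "card ({..<n} - T) = n - card T" using T fT by (simp add: card_Diff_subset)
  finally show ?thesis .
qed

lemma card_subs_disj:
  assumes T: "T \<subseteq> {..<n}"
  shows "card {A \<in> subs n d. A \<inter> T = {}} = (n - card T) choose d"
proof -
  have fT: "finite T" using T finite_subset by blast
  have "{A \<in> subs n d. A \<inter> T = {}} = {B. B \<subseteq> {..<n} - T \<and> card B = d}"
    unfolding subs_def by auto
  then have "card {A \<in> subs n d. A \<inter> T = {}} = card ({..<n} - T) choose d"
    by (simp add: n_subsets)
  also have "card ({..<n} - T) = n - card T" using T fT by (simp add: card_Diff_subset)
  finally show ?thesis .
qed

lemma choose_prod_formula:
  "t \<le> d \<Longrightarrow> d \<le> n \<Longrightarrow> ((n - t) choose (d - t)) * (\<Prod>i<t. n - i) = (n choose d) * (\<Prod>i<t. d - i)"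
proof (induction t arbitrary: n d)
  case 0 then show ?case by simp
next
  case (Suc t)
  then have d1: "d \<ge> 1" "n \<ge> 1" by auto
  have IH: "((n - 1 - t) choose (d - 1 - t)) * (\<Prod>i<t. n - 1 - i) = ((n - 1) choose (d - 1)) * (\<Prod>i<t. d - 1 - i)"
    using Suc.IH[of "d - 1" "n - 1"] Suc.prems by auto
  have absn: "d * (n choose d) = n * ((n - 1) choose (d - 1))"
    using binomial_absorption[of "d - 1" n] d1 by simp
  have "((n - Suc t) choose (d - Suc t)) * (\<Prod>i<Suc t. n - i)
      = n * (((n - 1 - t) choose (d - 1 - t)) * (\<Prod>i<t. n - 1 - i))"
    by (subst prod.lessThan_Suc_shift) simp
  also have "\<dots> = n * ((n - 1) choose (d - 1)) * (\<Prod>i<t. d - 1 - i)" using IH by simp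
  also have "\<dots> = (n choose d) * (d * (\<Prod>i<t. d - 1 - i))" using absn by (simp add: ac_simps)
  also have "d * (\<Prod>i<t. d - 1 - i) = (\<Prod>i<Suc t. d - i)"
    by (subst prod.lessThan_Suc_shift) simp
  finally show ?case .
qed


lemma prod_indv_sup: "finite T \<Longrightarrow> (\<Prod>j\<in>T. indv A j) = (if T \<subseteq> A then 1 else 0)"
  by (induction T rule: finite_induct) (auto simp: indv_def)

lemma prod_indv_disj: "finite T \<Longrightarrow> (\<Prod>j\<in>T. 1 - indv A j) = (if A \<inter> T = {} then 1 else 0)"
  by (induction T rule: finite_induct) (auto simp: indv_def)

lemma sum_prod_slice:
  assumes "T \<subseteq> {..<n}"
  shows "(\<Sum>x\<in>slice_vectors n d. \<Prod>j\<in>T. x j) = real (card {A \<in> subs n d. T \<subseteq> A})"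
proof -
  have fT: "finite T" using assms finite_subset by blast
  have "(\<Sum>x\<in>slice_vectors n d. \<Prod>j\<in>T. x j) = (\<Sum>A\<in>subs n d. if T \<subseteq> A then 1 else 0)"
    unfolding sum_slice using prod_indv_sup[OF fT] by simp
  also have "\<dots> = real (card {A \<in> subs n d. T \<subseteq> A})"
    using finite_subs by (simp add: sum.If_cases Int_def)
  finally show ?thesis .
qed

lemma sum_prod_slice_compl:
  assumes "T \<subseteq> {..<n}"
  shows "(\<Sum>x\<in>slice_vectors n d. \<Prod>j\<in>T. 1 - x j) = real ((n - card T) choose d)"
proof -
  have fT: "finite T" using assms finite_subset by blast
  have "(\<Sum>x\<in>slice_vectors n d. \<Prod>j\<in>T. 1 - x j) = (\<Sum>A\<in>subs n d. if A \<inter> T = {} then 1 else 0)"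
    unfolding sum_slice using prod_indv_disj[OF fT] by simp
  also have "\<dots> = real (card {A \<in> subs n d. A \<inter> T = {}})"
    using finite_subs by (simp add: sum.If_cases Int_def)
  finally show ?thesis using card_subs_disj[OF assms] by simp
qed

lemma ratio_le:
  assumes "t \<le> d" "d \<le> n" "0 < n"
  shows "real ((n - t) choose (d - t)) \<le> real (n choose d) * (real d / real n) ^ t"
proof -
  have F: "real ((n - t) choose (d - t)) * (\<Prod>i<t. real (n - i)) = real (n choose d) * (\<Prod>i<t. real (d - i))"
    using choose_prod_formula[OF assms(1,2)] by (metis of_nat_mult of_nat_prod)
  have pos: "(\<Prod>i<t. real (n - i)) > 0" using assms by (intro prod_pos) auto
  have "(\<Prod>i<t. real (d - i) * real n) \<le> (\<Prod>i<t. real d * real (n - i))"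
  proof (rule prod_mono)
    fix i assume "i \<in> {..<t}"
    then have "i < t" by simp
    then have "real (d - i) = real d - real i" "real (n - i) = real n - real i" using assms by auto
    moreover have "real i * real d \<le> real i * real n" using assms by (intro mult_left_mono) auto
    ultimately have "real (d - i) * real n \<le> real d * real (n - i)"
      by (simp add: algebra_simps)
    then show "0 \<le> real (d - i) * real n \<and> real (d - i) * real n \<le> real d * real (n - i)"
      by simp
  qed
  then have P: "(\<Prod>i<t. real (d - i)) * real n ^ t \<le> real d ^ t * (\<Prod>i<t. real (n - i))"
    by (simp add: prod.distrib)
  have "real ((n - t) choose (d - t)) * (\<Prod>i<t. real (n - i)) * real n ^ t
      = real (n choose d) * ((\<Prod>i<t. real (d - i)) * real n ^ t)" using F by simp
  also have "\<dots> \<le> real (n choose d) * (real d ^ t * (\<Prod>i<t. real (n - i)))"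
    using P by (intro mult_left_mono) auto
  finally have "real ((n - t) choose (d - t)) * real n ^ t * (\<Prod>i<t. real (n - i))
      \<le> real (n choose d) * real d ^ t * (\<Prod>i<t. real (n - i))" by (simp add: ac_simps)
  then have "real ((n - t) choose (d - t)) * real n ^ t \<le> real (n choose d) * real d ^ t"
    using pos by simp
  then show ?thesis using assms by (simp add: power_divide field_simps)
qed

lemma prod_moment_le:
  assumes T: "T \<subseteq> {..<n}" and dn: "d \<le> n" "0 < n"
  shows "(\<Sum>x\<in>slice_vectors n d. \<Prod>j\<in>T. x j) \<le> real (n choose d) * (real d / real n) ^ card T"
proof (cases "card T \<le> d")
  case True
  then show ?thesis unfolding sum_prod_slice[OF T] using card_subs_sup[OF T True] ratio_le[OF True dn] by simp
next
  case False
  have "{A \<in> subs n d. T \<subseteq> A} = {}"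
  proof (rule ccontr)
    assume "{A \<in> subs n d. T \<subseteq> A} \<noteq> {}"
    then obtain A where "A \<subseteq> {..<n}" "card A = d" "T \<subseteq> A" unfolding subs_def by auto
    then have "card T \<le> d" using card_mono finite_subset by (metis finite_lessThan)
    then show False using False by simp
  qed
  then have "card {A \<in> subs n d. T \<subseteq> A} = 0" by (simp only: card.empty)
  then show ?thesis unfolding sum_prod_slice[OF T] by simp
qed

lemma prod_moment_compl_le:
  assumes T: "T \<subseteq> {..<n}" and dn: "d \<le> n" "0 < n"
  shows "(\<Sum>x\<in>slice_vectors n d. \<Prod>j\<in>T. 1 - x j) \<le> real (n choose d) * (1 - real d / real n) ^ card T"
proof -
  have fT: "finite T" using T finite_subset by blast
  have ctn: "card T \<le> n" using card_mono[OF _ T] by simp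
  have e: "1 - real d / real n = real (n - d) / real n" using dn by (simp add: field_simps)
  show ?thesis
  proof (cases "card T \<le> n - d")
    case True
    have "(n - card T) choose d = (n - card T) choose ((n - card T) - d)"
      using True dn ctn by (intro binomial_symmetric) presburger
    also have "(n - card T) - d = (n - d) - card T" by simp
    finally have c1: "(n - card T) choose d = (n - card T) choose ((n - d) - card T)" .
    have c2: "n choose d = n choose (n - d)" using dn binomial_symmetric by blast
    show ?thesis unfolding sum_prod_slice_compl[OF T] c1 c2 e
      using ratio_le[OF True _ dn(2), of ] by simp
  next
    case False
    then have "n - card T < d" using ctn by presburger
    then have "(n - card T) choose d = 0" by simp
    then show ?thesis unfolding sum_prod_slice_compl[OF T] using dn by (simp del: binomial_eq_0_iff)
  qed
qed

lemma moment1: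
  assumes "j < n" "1 \<le> d" "d \<le> n"
  shows "(\<Sum>x\<in>slice_vectors n d. x j) = real (n choose d) * real d / real n"
proof -
  have "(\<Sum>x\<in>slice_vectors n d. \<Prod>i\<in>{j}. x i) = real (card {A \<in> subs n d. {j} \<subseteq> A})"
    by (rule sum_prod_slice) (use assms in auto)
  also have "\<dots> = real ((n - 1) choose (d - 1))" using card_subs_sup[of "{j}" n d] assms by simp
  finally have a: "(\<Sum>x\<in>slice_vectors n d. x j) = real ((n - 1) choose (d - 1))" by simp
  have "((n - 1) choose (d - 1)) * (\<Prod>i<1. n - i) = (n choose d) * (\<Prod>i<1. d - i)"
    using choose_prod_formula[of 1 d n] assms by simp
  then have "real ((n - 1) choose (d - 1)) * real n = real (n choose d) * real d"
    by (metis (no_types, lifting) diff_zero lessThan_0 lessThan_Suc of_nat_mult One_nat_def prod.insert prod.empty finite.emptyI empty_iff mult_1_right)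
  then show ?thesis using a assms by (simp add: field_simps)
qed

lemma moment2:
  assumes "j < n" "k < n" "j \<noteq> k" "2 \<le> d" "d \<le> n"
  shows "(\<Sum>x\<in>slice_vectors n d. x j * x k) = real (n choose d) * (real d * (real d - 1)) / (real n * (real n - 1))"
proof -
  have "(\<Sum>x\<in>slice_vectors n d. \<Prod>i\<in>{j,k}. x i) = real (card {A \<in> subs n d. {j,k} \<subseteq> A})"
    by (rule sum_prod_slice) (use assms in auto)
  also have "\<dots> = real ((n - 2) choose (d - 2))" using card_subs_sup[of "{j,k}" n d] assms by (simp add: numeral_2_eq_2)
  finally have a: "(\<Sum>x\<in>slice_vectors n d. x j * x k) = real ((n - 2) choose (d - 2))" using assms by simp
  have "((n - 2) choose (d - 2)) * (\<Prod>i<2. n - i) = (n choose d) * (\<Prod>i<2. d - i)"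
    using choose_prod_formula[of 2 d n] assms by simp
  then have E: "((n - 2) choose (d - 2)) * ((n - 1) * n) = (n choose d) * ((d - 1) * d)"
    by (simp add: numeral_2_eq_2 lessThan_Suc)
  have E2: "real ((n - 2) choose (d - 2)) * (real (n - 1) * real n) = real (n choose d) * (real (d - 1) * real d)"
    by (metis E of_nat_mult)
  have r1: "real (n - 1) = real n - 1" "real (d - 1) = real d - 1" using assms by auto
  have pos: "(real n - 1) * real n \<noteq> 0" using assms by auto
  have "real ((n - 2) choose (d - 2)) = real (n choose d) * ((real d - 1) * real d) / ((real n - 1) * real n)"
    using E2 pos unfolding r1 by (simp add: eq_divide_eq)
  then show ?thesis using a by (simp add: mult.commute)
qed


definition Yf :: "nat \<Rightarrow> real \<Rightarrow> (nat \<Rightarrow> real) \<Rightarrow> (nat \<Rightarrow> real) \<Rightarrow> real" where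
  "Yf n p b x = (\<Sum>j<n. b j * (x j - p))"

lemma exp_quad_bound:
  fixes a :: real assumes "\<bar>a\<bar> \<le> 1" shows "exp a \<le> 1 + a + a\<^sup>2"
proof (cases "0 \<le> a")
  case True then show ?thesis using exp_bound[of a] assms by auto
next
  case False
  define c where "c = - a"
  have c: "0 \<le> c" "c \<le> 1" using False assms c_def by auto
  have "1 \<le> (1 - c + c\<^sup>2) * (1 + c)" using c by (simp add: algebra_simps power2_eq_square power3_eq_cube)
  also have "\<dots> \<le> (1 - c + c\<^sup>2) * exp c"
  proof (rule mult_left_mono)
    show "1 + c \<le> exp c" by simp
    show "0 \<le> 1 - c + c\<^sup>2" using c by (simp add: power2_eq_square)
  qed
  finally have "exp (- c) \<le> 1 - c + c\<^sup>2"
    by (simp add: exp_minus divide_le_eq field_simps)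
  then show ?thesis using c_def by simp
qed

lemma factor_bound:
  fixes r a :: real
  assumes "0 \<le> r" "r \<le> 1" "\<bar>a\<bar> \<le> 1"
  shows "(1 + r * (exp a - 1)) * exp (- (r * a)) \<le> exp (a\<^sup>2)"
proof -
  have "1 + r * (exp a - 1) \<le> exp (r * (exp a - 1))" by simp
  then have "(1 + r * (exp a - 1)) * exp (- (r * a)) \<le> exp (r * (exp a - 1)) * exp (- (r * a))"
    by (intro mult_right_mono) auto
  also have "\<dots> = exp (r * (exp a - 1 - a))" by (simp add: exp_add[symmetric] algebra_simps)
  also have "\<dots> \<le> exp (a\<^sup>2)"
  proof -
    have h1: "exp a - 1 - a \<le> a\<^sup>2" using exp_quad_bound[OF assms(3)] by simp
    have h0: "0 \<le> exp a - 1 - a" using exp_ge_add_one_self[of a] by linarith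
    have "r * (exp a - 1 - a) \<le> 1 * (exp a - 1 - a)" using assms h0 by (intro mult_right_mono) auto
    then show ?thesis using h1 by simp
  qed
  finally show ?thesis .
qed

lemma mgf_raw_pos:
  assumes "1 \<le> d" "d \<le> n" "0 \<le> u" "\<And>j. j < n \<Longrightarrow> 0 \<le> b j"
  shows "(\<Sum>x\<in>slice_vectors n d. exp (u * (\<Sum>j<n. b j * x j)))
     \<le> real (n choose d) * (\<Prod>j<n. 1 + (real d / real n) * (exp (u * b j) - 1))"
proof -
  define e where "e j = exp (u * b j) - 1" for j
  have e0: "0 \<le> e j" if "j < n" for j using assms that unfolding e_def by simp
  define p where "p = real d / real n"
  have n0: "0 < n" using assms by simp
  have pt: "\<And>x. x \<in> slice_vectors n d \<Longrightarrow> exp (u * (\<Sum>j<n. b j * x j)) = (\<Sum>T\<in>Pow {..<n}. (\<Prod>j\<in>T. e j) * (\<Prod>j\<in>T. x j))"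
  proof -
    fix x assume x: "x \<in> slice_vectors n d"
    have "exp (u * (\<Sum>j<n. b j * x j)) = (\<Prod>j<n. exp (u * b j * x j))"
      by (simp add: sum_distrib_left exp_sum mult.assoc)
    also have "\<dots> = (\<Prod>j<n. e j * x j + 1)"
    proof (rule prod.cong[OF refl])
      fix j assume "j \<in> {..<n}"
      show "exp (u * b j * x j) = e j * x j + 1"
        using slice_vals[OF x, of j] unfolding e_def by auto
    qed
    also have "\<dots> = (\<Sum>T\<in>Pow {..<n}. (\<Prod>j\<in>T. e j * x j) * (\<Prod>j\<in>{..<n} - T. 1))"
      by (rule prod_add) simp
    also have "\<dots> = (\<Sum>T\<in>Pow {..<n}. (\<Prod>j\<in>T. e j) * (\<Prod>j\<in>T. x j))"
      by (simp add: prod.distrib)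
    finally show "exp (u * (\<Sum>j<n. b j * x j)) = (\<Sum>T\<in>Pow {..<n}. (\<Prod>j\<in>T. e j) * (\<Prod>j\<in>T. x j))" .
  qed
  have "(\<Sum>x\<in>slice_vectors n d. exp (u * (\<Sum>j<n. b j * x j)))
      = (\<Sum>x\<in>slice_vectors n d. \<Sum>T\<in>Pow {..<n}. (\<Prod>j\<in>T. e j) * (\<Prod>j\<in>T. x j))"
    using pt by (rule sum.cong[OF refl])
  also have "\<dots> = (\<Sum>T\<in>Pow {..<n}. (\<Prod>j\<in>T. e j) * (\<Sum>x\<in>slice_vectors n d. \<Prod>j\<in>T. x j))"
    by (subst sum.swap) (simp add: sum_distrib_left)
  also have "\<dots> \<le> (\<Sum>T\<in>Pow {..<n}. (\<Prod>j\<in>T. e j) * (real (n choose d) * p ^ card T))"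
  proof (rule sum_mono)
    fix T assume T: "T \<in> Pow {..<n}"
    have "0 \<le> (\<Prod>j\<in>T. e j)" using T e0 by (intro prod_nonneg) auto
    then show "(\<Prod>j\<in>T. e j) * (\<Sum>x\<in>slice_vectors n d. \<Prod>j\<in>T. x j) \<le> (\<Prod>j\<in>T. e j) * (real (n choose d) * p ^ card T)"
      using prod_moment_le[of T n d] T assms n0 unfolding p_def by (intro mult_left_mono) auto
  qed
  also have "\<dots> = real (n choose d) * (\<Sum>T\<in>Pow {..<n}. (\<Prod>j\<in>T. p * e j) * (\<Prod>j\<in>{..<n} - T. 1))"
    by (simp add: sum_distrib_left prod.distrib ac_simps)
  also have "(\<Sum>T\<in>Pow {..<n}. (\<Prod>j\<in>T. p * e j) * (\<Prod>j\<in>{..<n} - T. 1)) = (\<Prod>j<n. p * e j + 1)"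
    by (rule prod_add[symmetric]) simp
  finally show ?thesis unfolding e_def p_def by (simp add: ac_simps)
qed

lemma mgf_raw_neg:
  assumes "1 \<le> d" "d \<le> n" "u \<le> 0" "\<And>j. j < n \<Longrightarrow> 0 \<le> b j"
  shows "(\<Sum>x\<in>slice_vectors n d. exp (u * (\<Sum>j<n. b j * x j)))
     \<le> real (n choose d) * (\<Prod>j<n. exp (u * b j) * (1 + (1 - real d / real n) * (exp (- (u * b j)) - 1)))"
proof -
  define e where "e j = exp (- (u * b j)) - 1" for j
  have e0: "0 \<le> e j" if "j < n" for j using assms that unfolding e_def by (simp add: mult_nonpos_nonneg)
  define p where "p = 1 - real d / real n"
  have n0: "0 < n" using assms by simp
  have pt: "\<And>x. x \<in> slice_vectors n d \<Longrightarrow> exp (u * (\<Sum>j<n. b j * x j)) = (\<Prod>j<n. exp (u * b j)) * (\<Sum>T\<in>Pow {..<n}. (\<Prod>j\<in>T. e j) * (\<Prod>j\<in>T. 1 - x j))"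
  proof -
    fix x assume x: "x \<in> slice_vectors n d"
    have "exp (u * (\<Sum>j<n. b j * x j)) = (\<Prod>j<n. exp (u * b j * x j))"
      by (simp add: sum_distrib_left exp_sum mult.assoc)
    also have "\<dots> = (\<Prod>j<n. exp (u * b j) * (e j * (1 - x j) + 1))"
    proof (rule prod.cong[OF refl])
      fix j assume "j \<in> {..<n}"
      show "exp (u * b j * x j) = exp (u * b j) * (e j * (1 - x j) + 1)"
        using slice_vals[OF x, of j] unfolding e_def by (auto simp: exp_minus field_simps)
    qed
    also have "\<dots> = (\<Prod>j<n. exp (u * b j)) * (\<Prod>j<n. e j * (1 - x j) + 1)"
      by (simp add: prod.distrib)
    also have "(\<Prod>j<n. e j * (1 - x j) + 1) = (\<Sum>T\<in>Pow {..<n}. (\<Prod>j\<in>T. e j * (1 - x j)) * (\<Prod>j\<in>{..<n} - T. 1))"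
      by (rule prod_add) simp
    also have "\<dots> = (\<Sum>T\<in>Pow {..<n}. (\<Prod>j\<in>T. e j) * (\<Prod>j\<in>T. 1 - x j))"
      by (simp add: prod.distrib)
    finally show "exp (u * (\<Sum>j<n. b j * x j)) = (\<Prod>j<n. exp (u * b j)) * (\<Sum>T\<in>Pow {..<n}. (\<Prod>j\<in>T. e j) * (\<Prod>j\<in>T. 1 - x j))" .
  qed
  define E where "E = (\<Prod>j<n. exp (u * b j))"
  have E0: "0 \<le> E" unfolding E_def by (intro prod_nonneg) auto
  have "(\<Sum>x\<in>slice_vectors n d. exp (u * (\<Sum>j<n. b j * x j)))
      = (\<Sum>x\<in>slice_vectors n d. E * (\<Sum>T\<in>Pow {..<n}. (\<Prod>j\<in>T. e j) * (\<Prod>j\<in>T. 1 - x j)))"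
    using pt unfolding E_def by (rule sum.cong[OF refl])
  also have "\<dots> = E * (\<Sum>T\<in>Pow {..<n}. (\<Prod>j\<in>T. e j) * (\<Sum>x\<in>slice_vectors n d. \<Prod>j\<in>T. 1 - x j))"
    by (subst sum_distrib_left[symmetric], subst sum.swap) (simp add: sum_distrib_left)
  also have "\<dots> \<le> E * (\<Sum>T\<in>Pow {..<n}. (\<Prod>j\<in>T. e j) * (real (n choose d) * p ^ card T))"
  proof (intro mult_left_mono[OF _ E0] sum_mono)
    fix T assume T: "T \<in> Pow {..<n}"
    have "0 \<le> (\<Prod>j\<in>T. e j)" using T e0 by (intro prod_nonneg) auto
    then show "(\<Prod>j\<in>T. e j) * (\<Sum>x\<in>slice_vectors n d. \<Prod>j\<in>T. 1 - x j) \<le> (\<Prod>j\<in>T. e j) * (real (n choose d) * p ^ card T)"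
      using prod_moment_compl_le[of T n d] T assms n0 unfolding p_def by (intro mult_left_mono) auto
  qed
  also have "(\<Sum>T\<in>Pow {..<n}. (\<Prod>j\<in>T. e j) * (real (n choose d) * p ^ card T))
      = real (n choose d) * (\<Sum>T\<in>Pow {..<n}. (\<Prod>j\<in>T. p * e j) * (\<Prod>j\<in>{..<n} - T. 1))"
    by (simp add: sum_distrib_left prod.distrib ac_simps)
  also have "(\<Sum>T\<in>Pow {..<n}. (\<Prod>j\<in>T. p * e j) * (\<Prod>j\<in>{..<n} - T. 1)) = (\<Prod>j<n. p * e j + 1)"
    by (rule prod_add[symmetric]) simp
  finally have "(\<Sum>x\<in>slice_vectors n d. exp (u * (\<Sum>j<n. b j * x j))) \<le> real (n choose d) * (E * (\<Prod>j<n. p * e j + 1))"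
    by (simp add: ac_simps)
  also have "E * (\<Prod>j<n. p * e j + 1) = (\<Prod>j<n. exp (u * b j) * (1 + p * e j))"
    unfolding E_def by (simp add: prod.distrib ac_simps)
  finally show ?thesis unfolding e_def p_def .
qed


lemma Yf_split: "Yf n p b x = (\<Sum>j<n. b j * x j) - p * (\<Sum>j<n. b j)"
  unfolding Yf_def by (simp add: algebra_simps sum_subtractf sum_distrib_left)

lemma mgf_center:
  assumes "1 \<le> d" "d \<le> n" "\<And>j. j < n \<Longrightarrow> 0 \<le> b j" "\<And>j. j < n \<Longrightarrow> \<bar>u * b j\<bar> \<le> 1"
  shows "(\<Sum>x\<in>slice_vectors n d. exp (u * Yf n (real d / real n) b x))
     \<le> real (n choose d) * exp (u\<^sup>2 * (\<Sum>j<n. (b j)\<^sup>2))"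
proof -
  define p where "p = real d / real n"
  have p01: "0 \<le> p" "p \<le> 1" using assms unfolding p_def by auto
  have eq: "\<And>x. exp (u * Yf n p b x) = exp (u * (\<Sum>j<n. b j * x j)) * (\<Prod>j<n. exp (- (p * (u * b j))))"
    unfolding Yf_split by (simp add: exp_sum[symmetric] exp_add[symmetric] sum_distrib_left algebra_simps sum_negf)
  have "(\<Sum>x\<in>slice_vectors n d. exp (u * Yf n p b x))
      = (\<Sum>x\<in>slice_vectors n d. exp (u * (\<Sum>j<n. b j * x j))) * (\<Prod>j<n. exp (- (p * (u * b j))))"
    unfolding eq by (simp add: sum_distrib_right)
  also have "\<dots> \<le> real (n choose d) * (\<Prod>j<n. exp ((u * b j)\<^sup>2))"
  proof (cases "0 \<le> u")
    case True
    have "(\<Sum>x\<in>slice_vectors n d. exp (u * (\<Sum>j<n. b j * x j))) * (\<Prod>j<n. exp (- (p * (u * b j))))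
        \<le> real (n choose d) * (\<Prod>j<n. 1 + p * (exp (u * b j) - 1)) * (\<Prod>j<n. exp (- (p * (u * b j))))"
      using mgf_raw_pos[OF assms(1,2) True assms(3)] unfolding p_def
      by (intro mult_right_mono) (auto intro: prod_nonneg)
    also have "\<dots> = real (n choose d) * (\<Prod>j<n. (1 + p * (exp (u * b j) - 1)) * exp (- (p * (u * b j))))"
      by (simp only: prod.distrib mult.assoc)
    also have "\<dots> \<le> real (n choose d) * (\<Prod>j<n. exp ((u * b j)\<^sup>2))"
    proof (intro mult_left_mono prod_mono conjI)
      fix j assume "j \<in> {..<n}"
      then have j: "j < n" by simp
      have "0 \<le> exp (u * b j) - 1" using True assms(3)[OF j] by simp
      then show "0 \<le> (1 + p * (exp (u * b j) - 1)) * exp (- (p * (u * b j)))" using p01 by simp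
      show "(1 + p * (exp (u * b j) - 1)) * exp (- (p * (u * b j))) \<le> exp ((u * b j)\<^sup>2)"
        using factor_bound[OF p01 assms(4)[OF j]] .
    qed simp
    finally show ?thesis .
  next
    case False
    then have u0: "u \<le> 0" by simp
    have "(\<Sum>x\<in>slice_vectors n d. exp (u * (\<Sum>j<n. b j * x j))) * (\<Prod>j<n. exp (- (p * (u * b j))))
        \<le> real (n choose d) * (\<Prod>j<n. exp (u * b j) * (1 + (1 - p) * (exp (- (u * b j)) - 1))) * (\<Prod>j<n. exp (- (p * (u * b j))))"
      using mgf_raw_neg[OF assms(1,2) u0 assms(3)] unfolding p_def
      by (intro mult_right_mono) (auto intro: prod_nonneg)
    also have "\<dots> = real (n choose d) * (\<Prod>j<n. (1 + (1 - p) * (exp (- (u * b j)) - 1)) * exp (- ((1 - p) * (- (u * b j)))))"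
    proof -
      have e: "exp (u * b j) * (1 + (1 - p) * (exp (- (u * b j)) - 1)) * exp (- (p * (u * b j)))
          = (1 + (1 - p) * (exp (- (u * b j)) - 1)) * exp (- ((1 - p) * (- (u * b j))))" for j
      proof -
        have "exp (u * b j) * exp (- (p * (u * b j))) = exp (- ((1 - p) * (- (u * b j))))"
          by (simp add: exp_add[symmetric] algebra_simps)
        then show ?thesis by (simp add: ac_simps)
      qed
      show ?thesis unfolding mult.assoc[of "real (n choose d)"] prod.distrib[symmetric] e ..
    qed
    also have "\<dots> \<le> real (n choose d) * (\<Prod>j<n. exp ((- (u * b j))\<^sup>2))"
    proof (intro mult_left_mono prod_mono conjI)
      fix j assume "j \<in> {..<n}"
      then have j: "j < n" by simp
      have "0 \<le> exp (- (u * b j)) - 1" using u0 assms(3)[OF j] by (simp add: mult_nonpos_nonneg)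
      then show "0 \<le> (1 + (1 - p) * (exp (- (u * b j)) - 1)) * exp (- ((1 - p) * (- (u * b j))))" using p01 by simp
      show "(1 + (1 - p) * (exp (- (u * b j)) - 1)) * exp (- ((1 - p) * (- (u * b j)))) \<le> exp ((- (u * b j))\<^sup>2)"
        using factor_bound[of "1 - p" "- (u * b j)"] p01 assms(4)[OF j] by simp
    qed simp
    finally show ?thesis by simp
  qed
  also have "(\<Prod>j<n. exp ((u * b j)\<^sup>2)) = exp (u\<^sup>2 * (\<Sum>j<n. (b j)\<^sup>2))"
    by (simp add: exp_sum[symmetric] sum_distrib_left power_mult_distrib)
  finally show ?thesis unfolding p_def .
qed

lemma exp_amgm: "exp ((a::real) + c) \<le> (exp (2 * a) + exp (2 * c)) / 2"
proof -
  have "0 \<le> (exp a - exp c)\<^sup>2" by (rule zero_le_power2)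
  then have "2 * (exp a * exp c) \<le> (exp a)\<^sup>2 + (exp c)\<^sup>2" by (simp add: power2_diff)
  moreover have "(exp a)\<^sup>2 = exp (2 * a)" "(exp c)\<^sup>2 = exp (2 * c)"
    by (simp_all add: power2_eq_square exp_add[symmetric])
  ultimately show ?thesis by (simp add: exp_add)
qed

lemma exp_abs_le: "exp \<bar>z::real\<bar> \<le> exp z + exp (- z)"
proof -
  have "0 < exp z" "0 < exp (- z)" by auto
  then show ?thesis by (cases "0 \<le> z") (simp_all add: abs_if)
qed

lemma Yf_linear: "Yf n p (\<lambda>j. f j - g j) x = Yf n p f x - Yf n p g x"
  unfolding Yf_def sum_subtractf[symmetric] by (rule sum.cong) (auto simp: algebra_simps)

lemma mgf_abs:
  assumes "1 \<le> d" "d \<le> n" "0 \<le> u" "\<And>j. j < n \<Longrightarrow> 2 * u * \<bar>b j\<bar> \<le> 1"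
  shows "(\<Sum>x\<in>slice_vectors n d. exp (u * \<bar>Yf n (real d / real n) b x\<bar>))
     \<le> 2 * real (n choose d) * exp (4 * u\<^sup>2 * (\<Sum>j<n. (b j)\<^sup>2))"
proof -
  define p where "p = real d / real n"
  define bp where "bp j = max (b j) 0" for j
  define bm where "bm j = max (- b j) 0" for j
  have bb: "b = (\<lambda>j. bp j - bm j)" unfolding bp_def bm_def by (auto simp: max_def)
  let ?S = "slice_vectors n d"
  let ?N = "real (n choose d)"
  have M: "\<And>c. (\<forall>j<n. 0 \<le> c j \<and> c j \<le> \<bar>b j\<bar>) \<Longrightarrow>
     (\<Sum>x\<in>?S. exp (2 * u * \<bar>Yf n p c x\<bar>)) \<le> 2 * ?N * exp (4 * u\<^sup>2 * (\<Sum>j<n. (c j)\<^sup>2))"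
  proof -
    fix c assume c: "\<forall>j<n. 0 \<le> c j \<and> c j \<le> \<bar>b j\<bar>"
    have c1: "\<bar>(2 * u) * c j\<bar> \<le> 1" "\<bar>(- (2 * u)) * c j\<bar> \<le> 1" if "j < n" for j
    proof -
      have "2 * u * c j \<le> 2 * u * \<bar>b j\<bar>" using c that assms(3) by (intro mult_left_mono) auto
      then show "\<bar>(2 * u) * c j\<bar> \<le> 1" "\<bar>(- (2 * u)) * c j\<bar> \<le> 1"
        using assms(4)[OF that] c that assms(3) by (auto simp: abs_mult)
    qed
    have "(\<Sum>x\<in>?S. exp (2 * u * \<bar>Yf n p c x\<bar>))
        \<le> (\<Sum>x\<in>?S. exp ((2 * u) * Yf n p c x) + exp ((- (2 * u)) * Yf n p c x))"
      by (intro sum_mono) (metis exp_abs_le abs_mult abs_of_nonneg assms(3) mult_nonneg_nonneg zero_le_numeral mult_minus_left)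
    also have "\<dots> = (\<Sum>x\<in>?S. exp ((2 * u) * Yf n p c x)) + (\<Sum>x\<in>?S. exp ((- (2 * u)) * Yf n p c x))"
      by (simp add: sum.distrib)
    also have "\<dots> \<le> ?N * exp ((2 * u)\<^sup>2 * (\<Sum>j<n. (c j)\<^sup>2)) + ?N * exp ((- (2 * u))\<^sup>2 * (\<Sum>j<n. (c j)\<^sup>2))"
      using mgf_center[OF assms(1,2), of c "2 * u"] mgf_center[OF assms(1,2), of c "- (2 * u)"] c c1
      unfolding p_def by (intro add_mono) auto
    finally show "(\<Sum>x\<in>?S. exp (2 * u * \<bar>Yf n p c x\<bar>)) \<le> 2 * ?N * exp (4 * u\<^sup>2 * (\<Sum>j<n. (c j)\<^sup>2))"
      by (simp add: power_mult_distrib)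
  qed
  have bpb: "\<forall>j<n. 0 \<le> bp j \<and> bp j \<le> \<bar>b j\<bar>" "\<forall>j<n. 0 \<le> bm j \<and> bm j \<le> \<bar>b j\<bar>"
    unfolding bp_def bm_def by auto
  have sq: "(\<Sum>j<n. (bp j)\<^sup>2) \<le> (\<Sum>j<n. (b j)\<^sup>2)" "(\<Sum>j<n. (bm j)\<^sup>2) \<le> (\<Sum>j<n. (b j)\<^sup>2)"
  proof -
    have "(bp j)\<^sup>2 \<le> (b j)\<^sup>2" "(bm j)\<^sup>2 \<le> (b j)\<^sup>2" if "j < n" for j
      using power_mono[of "bp j" "\<bar>b j\<bar>" 2] power_mono[of "bm j" "\<bar>b j\<bar>" 2] bpb that by auto
    then show "(\<Sum>j<n. (bp j)\<^sup>2) \<le> (\<Sum>j<n. (b j)\<^sup>2)" "(\<Sum>j<n. (bm j)\<^sup>2) \<le> (\<Sum>j<n. (b j)\<^sup>2)"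
      by (auto intro!: sum_mono)
  qed
  have "(\<Sum>x\<in>?S. exp (u * \<bar>Yf n p b x\<bar>))
      \<le> (\<Sum>x\<in>?S. (exp (2 * u * \<bar>Yf n p bp x\<bar>) + exp (2 * u * \<bar>Yf n p bm x\<bar>)) / 2)"
  proof (rule sum_mono)
    fix x
    have "u * \<bar>Yf n p b x\<bar> \<le> u * \<bar>Yf n p bp x\<bar> + u * \<bar>Yf n p bm x\<bar>"
      using assms(3) by (subst bb, subst Yf_linear) (simp add: distrib_left[symmetric] mult_left_mono abs_triangle_ineq4)
    then have "exp (u * \<bar>Yf n p b x\<bar>) \<le> exp (u * \<bar>Yf n p bp x\<bar> + u * \<bar>Yf n p bm x\<bar>)" by simp
    also have "\<dots> \<le> (exp (2 * u * \<bar>Yf n p bp x\<bar>) + exp (2 * u * \<bar>Yf n p bm x\<bar>)) / 2"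
      using exp_amgm[of "u * \<bar>Yf n p bp x\<bar>" "u * \<bar>Yf n p bm x\<bar>"] by (simp add: mult.assoc)
    finally show "exp (u * \<bar>Yf n p b x\<bar>) \<le> (exp (2 * u * \<bar>Yf n p bp x\<bar>) + exp (2 * u * \<bar>Yf n p bm x\<bar>)) / 2" .
  qed
  also have "\<dots> = ((\<Sum>x\<in>?S. exp (2 * u * \<bar>Yf n p bp x\<bar>)) + (\<Sum>x\<in>?S. exp (2 * u * \<bar>Yf n p bm x\<bar>))) / 2"
    by (simp add: sum.distrib sum_divide_distrib[symmetric])
  also have "\<dots> \<le> (2 * ?N * exp (4 * u\<^sup>2 * (\<Sum>j<n. (b j)\<^sup>2)) + 2 * ?N * exp (4 * u\<^sup>2 * (\<Sum>j<n. (b j)\<^sup>2))) / 2"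
  proof -
    have "2 * ?N * exp (4 * u\<^sup>2 * (\<Sum>j<n. (bp j)\<^sup>2)) \<le> 2 * ?N * exp (4 * u\<^sup>2 * (\<Sum>j<n. (b j)\<^sup>2))"
      "2 * ?N * exp (4 * u\<^sup>2 * (\<Sum>j<n. (bm j)\<^sup>2)) \<le> 2 * ?N * exp (4 * u\<^sup>2 * (\<Sum>j<n. (b j)\<^sup>2))"
      using sq by (auto intro!: mult_left_mono)
    then show ?thesis using M[OF bpb(1)] M[OF bpb(2)] by (intro divide_right_mono add_mono) auto
  qed
  finally show ?thesis unfolding p_def by simp
qed


lemma mean0:
  assumes "1 \<le> d" "d \<le> n"
  shows "(\<Sum>x\<in>slice_vectors n d. Yf n (real d / real n) b x) = 0"
proof -
  have "(\<Sum>x\<in>slice_vectors n d. Yf n (real d / real n) b x)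
      = (\<Sum>j<n. b j * ((\<Sum>x\<in>slice_vectors n d. x j) - real (n choose d) * (real d / real n)))"
    unfolding Yf_def by (subst sum.swap) (simp add: sum_distrib_left sum_subtractf algebra_simps card_slice)
  also have "\<dots> = 0" using moment1[OF _ assms] by simp
  finally show ?thesis .
qed

lemma cov:
  assumes "2 \<le> d" "d < n" "j < n" "k < n"
  defines "p \<equiv> real d / real n"
  shows "(\<Sum>x\<in>slice_vectors n d. (x j - p) * (x k - p))
       = real (n choose d) * (p * (1 - p)) * ((if j = k then real n else 0) - 1) / (real n - 1)"
proof -
  let ?N = "real (n choose d)"
  have n1: "real n - 1 > 0" using assms by simp
  have m1: "(\<Sum>x\<in>slice_vectors n d. x i) = ?N * p" if "i < n" for i
    using moment1[of i n d] that assms unfolding p_def by simp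
  show ?thesis
  proof (cases "j = k")
    case True
    have "(\<Sum>x\<in>slice_vectors n d. (x j - p) * (x k - p)) = (\<Sum>x\<in>slice_vectors n d. (1 - 2 * p) * x j + p\<^sup>2)"
    proof (rule sum.cong[OF refl])
      fix x assume "x \<in> slice_vectors n d"
      then have "x j = 0 \<or> x j = 1" by (rule slice_vals)
      then show "(x j - p) * (x k - p) = (1 - 2 * p) * x j + p\<^sup>2" using True
        by (auto simp: power2_eq_square algebra_simps)
    qed
    also have "\<dots> = (1 - 2 * p) * (?N * p) + ?N * p\<^sup>2"
      by (simp add: sum.distrib sum_distrib_left[symmetric] m1[OF assms(3)] card_slice)
    also have "\<dots> = ?N * (p * (1 - p)) * ((if j = k then real n else 0) - 1) / (real n - 1)"
      using True n1 by (simp add: field_simps power2_eq_square)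
    finally show ?thesis .
  next
    case False
    have "(\<Sum>x\<in>slice_vectors n d. (x j - p) * (x k - p))
        = (\<Sum>x\<in>slice_vectors n d. x j * x k) - p * (\<Sum>x\<in>slice_vectors n d. x j) - p * (\<Sum>x\<in>slice_vectors n d. x k) + ?N * p\<^sup>2"
      by (simp add: algebra_simps sum.distrib sum_subtractf sum_distrib_left card_slice power2_eq_square)
    also have "\<dots> = ?N * (real d * (real d - 1)) / (real n * (real n - 1)) - 2 * p * (?N * p) + ?N * p\<^sup>2"
      using moment2[OF assms(3,4) False assms(1)] assms m1 by simp
    also have "\<dots> = ?N * (p * (1 - p)) * ((if j = k then real n else 0) - 1) / (real n - 1)"
      using False n1 assms unfolding p_def by (simp add: field_simps power2_eq_square)
    finally show ?thesis .
  qed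
qed

lemma swap3:
  "(\<Sum>x\<in>X. \<Sum>j\<in>J. \<Sum>k\<in>K. f x j k) = (\<Sum>j\<in>J. \<Sum>k\<in>K. \<Sum>x\<in>X. (f x j k :: real))"
  by (subst sum.swap) (simp add: sum.swap[of _ X])

lemma var_formula:
  assumes "2 \<le> d" "d < n"
  defines "p \<equiv> real d / real n"
  shows "(\<Sum>x\<in>slice_vectors n d. (Yf n p b x)\<^sup>2)
       = real (n choose d) * (p * (1 - p)) * (real n * (\<Sum>j<n. (b j)\<^sup>2) - (\<Sum>j<n. b j)\<^sup>2) / (real n - 1)"
proof -
  let ?N = "real (n choose d)"
  define c where "c = ?N * (p * (1 - p)) / (real n - 1)"
  have "(\<Sum>x\<in>slice_vectors n d. (Yf n p b x)\<^sup>2)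
      = (\<Sum>x\<in>slice_vectors n d. \<Sum>j<n. \<Sum>k<n. (b j * (x j - p)) * (b k * (x k - p)))"
    unfolding Yf_def power2_eq_square sum_product ..
  also have "\<dots> = (\<Sum>j<n. \<Sum>k<n. \<Sum>x\<in>slice_vectors n d. (b j * (x j - p)) * (b k * (x k - p)))"
    by (rule swap3)
  also have "\<dots> = (\<Sum>j<n. \<Sum>k<n. (b j * b k) * (\<Sum>x\<in>slice_vectors n d. (x j - p) * (x k - p)))"
  proof (intro sum.cong refl)
    fix j k
    show "(\<Sum>x\<in>slice_vectors n d. (b j * (x j - p)) * (b k * (x k - p))) = (b j * b k) * (\<Sum>x\<in>slice_vectors n d. (x j - p) * (x k - p))"
      by (simp add: sum_distrib_left mult_ac)
  qed
  also have "\<dots> = (\<Sum>j<n. \<Sum>k<n. (b j * b k) * (c * ((if j = k then real n else 0) - 1)))"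
  proof (intro sum.cong refl)
    fix j k assume "j \<in> {..<n}" "k \<in> {..<n}"
    then show "(b j * b k) * (\<Sum>x\<in>slice_vectors n d. (x j - p) * (x k - p)) = (b j * b k) * (c * ((if j = k then real n else 0) - 1))"
      using cov[OF assms(1,2), of j k] unfolding p_def c_def by simp
  qed
  also have "\<dots> = (\<Sum>j<n. c * real n * (b j)\<^sup>2 - c * (b j * (\<Sum>k<n. b k)))"
  proof (rule sum.cong[OF refl])
    fix j assume j: "j \<in> {..<n}"
    have "(\<Sum>k<n. (b j * b k) * (c * ((if j = k then real n else 0) - 1)))
        = (\<Sum>k<n. (if j = k then c * real n * (b j)\<^sup>2 else 0) - c * (b j * b k))"
      by (rule sum.cong[OF refl]) (auto simp: power2_eq_square algebra_simps)
    also have "\<dots> = c * real n * (b j)\<^sup>2 - c * (b j * (\<Sum>k<n. b k))"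
      using j by (simp add: sum_subtractf sum_distrib_left)
    finally show "(\<Sum>k<n. (b j * b k) * (c * ((if j = k then real n else 0) - 1))) = c * real n * (b j)\<^sup>2 - c * (b j * (\<Sum>k<n. b k))" .
  qed
  also have "\<dots> = c * (real n * (\<Sum>j<n. (b j)\<^sup>2) - (\<Sum>j<n. b j)\<^sup>2)"
    by (simp add: sum_subtractf sum_distrib_left power2_eq_square sum_distrib_right right_diff_distrib mult.assoc mult.commute[of "b _" "b _"])
  finally show ?thesis unfolding c_def by simp
qed

lemma pow4_exp: "0 \<le> (w::real) \<Longrightarrow> w ^ 4 \<le> 256 * exp w"
proof -
  assume w: "0 \<le> w"
  have "w / 4 \<le> exp (w / 4)" using exp_ge_add_one_self[of "w/4"] by linarith
  then have "(w / 4) ^ 4 \<le> exp (w / 4) ^ 4" using w by (intro power_mono) auto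
  also have "exp (w / 4) ^ 4 = exp w" by (simp add: exp_of_nat_mult[symmetric])
  finally have "(w / 4) ^ 4 \<le> exp w" .
  then show ?thesis by (simp add: power_divide divide_le_eq)
qed

lemma fourth_moment:
  assumes "1 \<le> d" "d \<le> n" "0 < (\<Sum>j<n. (b j)\<^sup>2)"
  shows "(\<Sum>x\<in>slice_vectors n d. (Yf n (real d / real n) b x) ^ 4) \<le> 24576 * (\<Sum>j<n. (b j)\<^sup>2)\<^sup>2 * real (n choose d)"
proof -
  define s2 where "s2 = (\<Sum>j<n. (b j)\<^sup>2)"
  define u where "u = 1 / (2 * sqrt s2)"
  let ?Y = "Yf n (real d / real n) b"
  have s2: "0 < s2" using assms unfolding s2_def by simp
  have u0: "0 < u" using s2 unfolding u_def by simp
  have bj: "2 * u * \<bar>b j\<bar> \<le> 1" if "j < n" for j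
  proof -
    have "(b j)\<^sup>2 \<le> s2" unfolding s2_def using that by (intro member_le_sum) auto
    then have "\<bar>b j\<bar> \<le> sqrt s2" using real_le_rsqrt by (simp add: real_sqrt_abs[symmetric] del: real_sqrt_abs) 
    then show ?thesis using s2 unfolding u_def by (simp add: field_simps)
  qed
  have u2: "u\<^sup>2 = 1 / (4 * s2)" using s2 unfolding u_def by (simp add: power_divide power_mult_distrib)
  have u4: "u ^ 4 = 1 / (16 * s2\<^sup>2)"
  proof -
    have "u ^ 4 = (u\<^sup>2)\<^sup>2" by simp
    then show ?thesis unfolding u2 by (simp add: power_divide power_mult_distrib)
  qed
  have pt: "(?Y x) ^ 4 \<le> 4096 * s2\<^sup>2 * exp (u * \<bar>?Y x\<bar>)" for x
  proof -
    have "(u * \<bar>?Y x\<bar>) ^ 4 \<le> 256 * exp (u * \<bar>?Y x\<bar>)" using u0 by (intro pow4_exp) simp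
    then have "u ^ 4 * (?Y x) ^ 4 \<le> 256 * exp (u * \<bar>?Y x\<bar>)" by (simp add: power_mult_distrib power_abs)
    then show ?thesis using s2 unfolding u4 by (simp add: field_simps)
  qed
  have "(\<Sum>x\<in>slice_vectors n d. (?Y x) ^ 4) \<le> (\<Sum>x\<in>slice_vectors n d. 4096 * s2\<^sup>2 * exp (u * \<bar>?Y x\<bar>))"
    using pt by (rule sum_mono)
  also have "\<dots> = 4096 * s2\<^sup>2 * (\<Sum>x\<in>slice_vectors n d. exp (u * \<bar>?Y x\<bar>))" by (simp add: sum_distrib_left)
  also have "\<dots> \<le> 4096 * s2\<^sup>2 * (2 * real (n choose d) * exp (4 * u\<^sup>2 * s2))"
    using mgf_abs[OF assms(1,2) _ bj] u0 unfolding s2_def by (intro mult_left_mono) auto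
  also have "4 * u\<^sup>2 * s2 = 1" using s2 unfolding u_def by (simp add: power_divide power_mult_distrib)
  also have "4096 * s2\<^sup>2 * (2 * real (n choose d) * exp 1) \<le> 4096 * s2\<^sup>2 * (2 * real (n choose d) * 3)"
    using exp_le by (intro mult_left_mono) auto
  finally show ?thesis unfolding s2_def by simp
qed


lemma card_filter_sum: "finite S \<Longrightarrow> (\<Sum>x\<in>S. if P x then 1 else 0) = real (card {x \<in> S. P x})"
  by (simp add: sum.If_cases Int_def)

lemma pow4_le: "((a::real) + c) ^ 4 \<le> 8 * (a ^ 4 + c ^ 4)"
proof -
  have h1: "(a + c)\<^sup>2 \<le> 2 * (a\<^sup>2 + c\<^sup>2)"
  proof -
    have "0 \<le> (a - c)\<^sup>2" by (rule zero_le_power2)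
    then show ?thesis by (simp add: power2_eq_square algebra_simps)
  qed
  have h2: "(a\<^sup>2 + c\<^sup>2)\<^sup>2 \<le> 2 * (a ^ 4 + c ^ 4)"
  proof -
    have "0 \<le> (a\<^sup>2 - c\<^sup>2)\<^sup>2" by (rule zero_le_power2)
    then show ?thesis by (simp add: power2_eq_square power4_eq_xxxx algebra_simps)
  qed
  have "(a + c) ^ 4 = ((a + c)\<^sup>2)\<^sup>2" by simp
  also have "\<dots> \<le> (2 * (a\<^sup>2 + c\<^sup>2))\<^sup>2" using h1 by (intro power_mono) auto
  also have "\<dots> = 4 * (a\<^sup>2 + c\<^sup>2)\<^sup>2" by (simp add: power2_eq_square algebra_simps)
  also have "\<dots> \<le> 8 * (a ^ 4 + c ^ 4)" using h2 by simp
  finally show ?thesis .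
qed

lemma levy:
  assumes d2: "2 \<le> d" "d < n"
    and pdef: "p = real d / real n"
    and s2: "1/4 \<le> (\<Sum>j<n. (b j)\<^sup>2)"
    and l1: "(\<Sum>j<n. \<bar>b j\<bar>)\<^sup>2 \<le> real n / 64"
  shows "(p * (1 - p))\<^sup>2 / 10^8 * real (n choose d)
     \<le> real (card {x \<in> slice_vectors n d. p * (1 - p) / 16 \<le> (Yf n p b x - t)\<^sup>2})"
proof -
  let ?S = "slice_vectors n d"
  define N where "N = real (n choose d)"
  define q where "q = p * (1 - p)"
  define s where "s = (\<Sum>j<n. (b j)\<^sup>2)"
  define G where "G = {x \<in> ?S. q / 16 \<le> (Yf n p b x - t)\<^sup>2}"
  define Y where "Y = Yf n p b"
  have fS: "finite ?S" by (rule finite_slice)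
  have N0: "0 < N" unfolding N_def using d2 by simp
  have p01: "0 < p" "p < 1" using d2 unfolding pdef by auto
  have q0: "0 < q" "q \<le> 1/4"
  proof -
    show "0 < q" unfolding q_def using p01 by simp
    have "0 \<le> (2 * p - 1)\<^sup>2" by (rule zero_le_power2)
    then show "q \<le> 1/4" unfolding q_def by (simp add: power2_eq_square algebra_simps)
  qed
  have s0: "1/4 \<le> s" using s2 unfolding s_def .
  have n2: "2 \<le> real n" using d2 by simp
  have sumsq: "(\<Sum>j<n. b j)\<^sup>2 \<le> real n / 64"
  proof -
    have "\<bar>\<Sum>j<n. b j\<bar> \<le> (\<Sum>j<n. \<bar>b j\<bar>)" by (rule sum_abs)
    then have "(\<Sum>j<n. b j)\<^sup>2 \<le> (\<Sum>j<n. \<bar>b j\<bar>)\<^sup>2"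
      using power_mono[OF \<open>\<bar>\<Sum>j<n. b j\<bar> \<le> (\<Sum>j<n. \<bar>b j\<bar>)\<close>, of 2] by simp
    then show ?thesis using l1 by simp
  qed
  have V: "(\<Sum>x\<in>?S. (Y x)\<^sup>2) = N * q * (real n * s - (\<Sum>j<n. b j)\<^sup>2) / (real n - 1)"
    using var_formula[OF d2, of b] unfolding Y_def N_def q_def s_def pdef by simp
  have hns: "real n * (1/4) \<le> real n * s" using s0 by (intro mult_left_mono) auto
  have nn: "0 \<le> (real n * s - (\<Sum>j<n. b j)\<^sup>2) / (real n - 1)"
  proof (rule divide_nonneg_nonneg)
    show "0 \<le> real n * s - (\<Sum>j<n. b j)\<^sup>2" using sumsq hns by linarith
  qed (use n2 in simp)
  have VL: "7/8 * q * s * N \<le> (\<Sum>x\<in>?S. (Y x)\<^sup>2)"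
  proof -
    have h: "real n * (1/4) \<le> real n * s" using s0 by (intro mult_left_mono) auto
    have e: "15/16 * (real n - 1) * s = 15/16 * (real n * s) - 15/16 * s" by (simp add: field_simps)
    have "15/16 * (real n - 1) * s \<le> real n * s - (\<Sum>j<n. b j)\<^sup>2" unfolding e using sumsq s0 h by linarith
    then have "15/16 * s \<le> (real n * s - (\<Sum>j<n. b j)\<^sup>2) / (real n - 1)" using n2 by (simp add: field_simps)
    then have "7/8 * s \<le> (real n * s - (\<Sum>j<n. b j)\<^sup>2) / (real n - 1)" using s0 by linarith
    then have "N * q * (7/8 * s) \<le> N * q * ((real n * s - (\<Sum>j<n. b j)\<^sup>2) / (real n - 1))"
      using N0 q0 by (intro mult_left_mono) auto
    then show ?thesis unfolding V by (simp add: ac_simps)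
  qed
  have VU: "(\<Sum>x\<in>?S. (Y x)\<^sup>2) \<le> s * N / 2"
  proof -
    have "(real n * s - (\<Sum>j<n. b j)\<^sup>2) / (real n - 1) \<le> 2 * s"
    proof -
      have "s * 2 \<le> s * real n" using s0 n2 by (intro mult_left_mono) auto
      moreover have "0 \<le> (\<Sum>j<n. b j)\<^sup>2" by simp
      ultimately show ?thesis using n2 by (simp add: field_simps add_increasing2)
    qed
    then have "N * q * ((real n * s - (\<Sum>j<n. b j)\<^sup>2) / (real n - 1)) \<le> N * (1/4) * (2 * s)"
      using N0 q0 s0 nn by (intro mult_mono) auto
    then show ?thesis unfolding V by (simp add: mult.commute)
  qed
  have M0: "(\<Sum>x\<in>?S. Y x) = 0" using mean0[of d n b] d2 unfolding Y_def pdef by simp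
  show ?thesis
  proof (cases "400 * s \<le> t\<^sup>2")
    case True
    define sg where "sg = sqrt s"
    have sg: "0 < sg" "sg\<^sup>2 = s" using s0 unfolding sg_def by auto
    have tb: "20 * sg \<le> \<bar>t\<bar>"
    proof -
      have "(20 * sg)\<^sup>2 \<le> t\<^sup>2" using True sg by (simp add: power_mult_distrib)
      then show ?thesis using sg abs_le_square_iff[of "20 * sg" t] by simp
    qed
    have bad: "361 * s \<le> (Y x)\<^sup>2" if x: "x \<in> ?S - G" for x
    proof -
      have "(Y x - t)\<^sup>2 < q / 16" using x unfolding G_def Y_def by auto
      also have "q / 16 \<le> (sg / 4)\<^sup>2" using q0 s0 sg by (simp add: power_divide)
      finally have "\<bar>Y x - t\<bar> < sg / 4" using sg power2_less_imp_less[of "\<bar>Y x - t\<bar>" "sg / 4"] by simp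
      then have "19 * sg \<le> \<bar>Y x\<bar>" using tb sg by linarith
      then have "(19 * sg)\<^sup>2 \<le> (Y x)\<^sup>2" using sg power_mono[OF \<open>19 * sg \<le> \<bar>Y x\<bar>\<close>, of 2] by simp
      then show ?thesis using sg by (simp add: power_mult_distrib)
    qed
    have "real (card (?S - G)) * (361 * s) = (\<Sum>x\<in>?S - G. 361 * s)" by simp
    also have "\<dots> \<le> (\<Sum>x\<in>?S - G. (Y x)\<^sup>2)" using bad by (rule sum_mono)
    also have "\<dots> \<le> (\<Sum>x\<in>?S. (Y x)\<^sup>2)" using fS by (intro sum_mono2) auto
    also have "\<dots> \<le> s * N / 2" by (rule VU)
    finally have cb: "real (card (?S - G)) \<le> N / 722" using s0 by (simp add: field_simps)
    have GS: "G \<subseteq> ?S" unfolding G_def by auto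
    have "card ?S = card (?S - G) + card G"
      using card_Diff_subset[OF finite_subset[OF GS fS] GS] card_mono[OF fS GS] by simp
    then have "real (card G) = N - real (card (?S - G))" unfolding N_def card_slice by simp
    then have "721 / 722 * N \<le> real (card G)" using cb by simp
    moreover have "q\<^sup>2 / 10^8 * N \<le> 721 / 722 * N"
    proof -
      have "q\<^sup>2 \<le> 1" using q0 by (simp add: power_le_one)
      then show ?thesis using N0 by (intro mult_right_mono) auto
    qed
    ultimately have "q\<^sup>2 / 10^8 * N \<le> real (card G)" by linarith
    then show ?thesis unfolding G_def q_def Y_def N_def .
  next
    case False
    define W where "W x = Y x - t" for x
    define R where "R = 6000000 * s / q"
    have R0: "0 < R" unfolding R_def using s0 q0 by simp
    have W2: "7/8 * q * s * N \<le> (\<Sum>x\<in>?S. (W x)\<^sup>2)"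
    proof -
      have "(\<Sum>x\<in>?S. (W x)\<^sup>2) = (\<Sum>x\<in>?S. (Y x)\<^sup>2) - 2 * t * (\<Sum>x\<in>?S. Y x) + N * t\<^sup>2"
        unfolding W_def power2_diff by (simp add: sum.distrib sum_subtractf sum_distrib_left N_def card_slice algebra_simps)
      then have "(\<Sum>x\<in>?S. (W x)\<^sup>2) = (\<Sum>x\<in>?S. (Y x)\<^sup>2) + N * t\<^sup>2" using M0 by simp
      moreover have "0 \<le> N * t\<^sup>2" using N0 by simp
      ultimately show ?thesis using VL by linarith
    qed
    have W4: "(\<Sum>x\<in>?S. (W x) ^ 4) \<le> 1500000 * s\<^sup>2 * N"
    proof -
      have s00: "0 < (\<Sum>j<n. (b j)\<^sup>2)" using s0 unfolding s_def by simp
      have "(\<Sum>x\<in>?S. (W x) ^ 4) \<le> (\<Sum>x\<in>?S. 8 * ((Y x) ^ 4 + t ^ 4))"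
      proof (rule sum_mono)
        fix x show "(W x) ^ 4 \<le> 8 * ((Y x) ^ 4 + t ^ 4)" unfolding W_def using pow4_le[of "Y x" "- t"] by simp
      qed
      also have "\<dots> = 8 * (\<Sum>x\<in>?S. (Y x) ^ 4) + 8 * N * t ^ 4"
        by (simp add: sum.distrib sum_distrib_left N_def card_slice)
      also have "\<dots> \<le> 8 * (24576 * s\<^sup>2 * N) + 8 * N * (160000 * s\<^sup>2)"
      proof (intro add_mono mult_left_mono)
        show "(\<Sum>x\<in>?S. (Y x) ^ 4) \<le> 24576 * s\<^sup>2 * N"
          using fourth_moment[of d n b] d2 s00 unfolding Y_def pdef s_def N_def by simp
        have "t\<^sup>2 \<le> 400 * s" using False by simp
        then have "(t\<^sup>2)\<^sup>2 \<le> (400 * s)\<^sup>2" by (intro power_mono) auto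
        then show "t ^ 4 \<le> 160000 * s\<^sup>2" by (simp add: power_mult_distrib power4_eq_xxxx power2_eq_square)
      qed (use N0 in auto)
      finally have "(\<Sum>x\<in>?S. (W x) ^ 4) \<le> 1476608 * (N * s\<^sup>2)" by simp
      moreover have "0 \<le> N * s\<^sup>2" using N0 by simp
      ultimately have "(\<Sum>x\<in>?S. (W x) ^ 4) \<le> 1500000 * (N * s\<^sup>2)" by linarith
      then show ?thesis by (simp only: mult.commute mult.left_commute)
    qed
    have pt: "(W x)\<^sup>2 \<le> q / 16 + R * (if q / 16 \<le> (W x)\<^sup>2 then 1 else 0) + (W x) ^ 4 / R" for x
    proof -
      have w4: "(W x) ^ 4 = (W x)\<^sup>2 * (W x)\<^sup>2" by (simp add: power4_eq_xxxx power2_eq_square)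
      have nn4: "0 \<le> (W x) ^ 4 / R" unfolding w4 using R0 by simp
      show ?thesis
      proof (cases "q / 16 \<le> (W x)\<^sup>2")
        case True
        show ?thesis
        proof (cases "(W x)\<^sup>2 \<le> R")
          case True
          then show ?thesis unfolding if_P[OF \<open>q / 16 \<le> (W x)\<^sup>2\<close>] mult_1_right using nn4 q0 by linarith
        next
          case False
          have "(W x)\<^sup>2 * R \<le> (W x)\<^sup>2 * (W x)\<^sup>2" using False R0 by (intro mult_left_mono) auto
          then have "(W x)\<^sup>2 \<le> (W x) ^ 4 / R" unfolding w4 using R0 by (simp add: pos_le_divide_eq)
          then show ?thesis unfolding if_P[OF \<open>q / 16 \<le> (W x)\<^sup>2\<close>] mult_1_right using R0 q0 by linarith
        qed
      next
        case False
        then show ?thesis unfolding if_not_P[OF False] mult_zero_right using nn4 by linarith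
      qed
    qed
    have "(\<Sum>x\<in>?S. (W x)\<^sup>2) \<le> (\<Sum>x\<in>?S. q / 16 + R * (if q / 16 \<le> (W x)\<^sup>2 then 1 else 0) + (W x) ^ 4 / R)"
      by (rule sum_mono) (rule pt)
    then have "7/8 * q * s * N \<le> (\<Sum>x\<in>?S. q / 16 + R * (if q / 16 \<le> (W x)\<^sup>2 then 1 else 0) + (W x) ^ 4 / R)"
      using W2 by linarith
    also have "\<dots> = N * (q / 16) + R * real (card {x \<in> ?S. q / 16 \<le> (W x)\<^sup>2}) + (\<Sum>x\<in>?S. (W x) ^ 4) / R"
    proof -
      have "(\<Sum>x\<in>?S. q / 16 + R * (if q / 16 \<le> (W x)\<^sup>2 then 1 else 0) + (W x) ^ 4 / R)
          = (\<Sum>x\<in>?S. q / 16) + R * (\<Sum>x\<in>?S. (if q / 16 \<le> (W x)\<^sup>2 then 1 else 0)) + (\<Sum>x\<in>?S. (W x) ^ 4) / R"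
        by (simp only: sum.distrib sum_distrib_left sum_divide_distrib)
      also have "(\<Sum>x\<in>?S. q / 16) = N * (q / 16)" by (simp add: N_def card_slice)
      also have "(\<Sum>x\<in>?S. (if q / 16 \<le> (W x)\<^sup>2 then 1 else 0)) = real (card {x \<in> ?S. q / 16 \<le> (W x)\<^sup>2})"
        by (rule card_filter_sum[OF fS])
      finally show ?thesis .
    qed
    also have "(\<Sum>x\<in>?S. (W x) ^ 4) / R \<le> 1500000 * s\<^sup>2 * N / R" using W4 R0 by (simp add: divide_right_mono)
    also have "1500000 * s\<^sup>2 * N / R = q * s * N / 4"
    proof -
      have "1500000 * s\<^sup>2 * N / R = 1500000 * s\<^sup>2 * N * q / (6000000 * s)" unfolding R_def by simp
      also have "\<dots> = q * s * N / 4" using s0 by (simp add: power2_eq_square)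
      finally show ?thesis .
    qed
    finally have "7/8 * q * s * N \<le> N * (q / 16) + R * real (card {x \<in> ?S. q / 16 \<le> (W x)\<^sup>2}) + q * s * N / 4" by simp
    moreover have "N * (q / 16) \<le> q * s * N / 4" using s0 q0 N0 by (simp add: field_simps)
    ultimately have "3/8 * q * s * N \<le> R * real (card {x \<in> ?S. q / 16 \<le> (W x)\<^sup>2})" by linarith
    then have "3/8 * q * s * N / R \<le> real (card {x \<in> ?S. q / 16 \<le> (W x)\<^sup>2})" using R0 by (simp add: field_simps)
    moreover have "3/8 * q * s * N / R = q\<^sup>2 * N / 16000000"
    proof -
      have "3/8 * q * s * N / R = 3/8 * q * s * N * q / (6000000 * s)" unfolding R_def by simp
      also have "\<dots> = q\<^sup>2 * N / 16000000" using s0 by (simp add: power2_eq_square)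
      finally show ?thesis .
    qed
    moreover have "q\<^sup>2 / 10^8 * N \<le> q\<^sup>2 * N / 16000000" using N0 q0 by (simp add: field_simps)
    ultimately have "q\<^sup>2 / 10^8 * N \<le> real (card {x \<in> ?S. q / 16 \<le> (W x)\<^sup>2})" by linarith
    then show ?thesis unfolding W_def Y_def q_def N_def .
  qed
qed


lemma card_slice_matrices: "card (slice_matrices m n d) = (n choose d) ^ m"
  unfolding slice_matrices_def by (simp add: card_PiE card_slice)

lemma finite_slice_matrices: "finite (slice_matrices m n d)"
  unfolding slice_matrices_def by (intro finite_PiE) (auto simp: finite_slice)

lemma sum_exp_PiE:
  fixes h :: "(nat \<Rightarrow> real) \<Rightarrow> real"
  shows "(\<Sum>M\<in>slice_matrices m n d. exp (\<Sum>i<m. h (M i))) = (\<Sum>x\<in>slice_vectors n d. exp (h x)) ^ m"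
proof -
  have "(\<Sum>M\<in>slice_matrices m n d. exp (\<Sum>i<m. h (M i))) = (\<Sum>M\<in>slice_matrices m n d. \<Prod>i<m. exp (h (M i)))"
    by (simp add: exp_sum)
  also have "\<dots> = (\<Prod>i<m. \<Sum>x\<in>slice_vectors n d. exp (h x))"
    unfolding slice_matrices_def by (rule prod_sum_PiE[symmetric]) (auto simp: finite_slice)
  finally show ?thesis by simp
qed

lemma chernoff:
  fixes h :: "(nat \<Rightarrow> real) \<Rightarrow> real"
  shows "real (card {M \<in> slice_matrices m n d. a \<le> (\<Sum>i<m. h (M i))})
     \<le> exp (- a) * (\<Sum>x\<in>slice_vectors n d. exp (h x)) ^ m"
proof -
  let ?SM = "slice_matrices m n d"
  have "real (card {M \<in> ?SM. a \<le> (\<Sum>i<m. h (M i))}) = (\<Sum>M\<in>?SM. if a \<le> (\<Sum>i<m. h (M i)) then 1 else 0)"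
    using card_filter_sum[OF finite_slice_matrices] by simp
  also have "\<dots> \<le> (\<Sum>M\<in>?SM. exp (- a) * exp (\<Sum>i<m. h (M i)))"
  proof (rule sum_mono)
    fix M
    have "(if a \<le> (\<Sum>i<m. h (M i)) then 1 else 0) \<le> exp ((\<Sum>i<m. h (M i)) - a)"
      by (auto simp: one_le_exp_iff)
    then show "(if a \<le> (\<Sum>i<m. h (M i)) then 1 else 0) \<le> exp (- a) * exp (\<Sum>i<m. h (M i))"
      by (simp add: exp_diff exp_minus field_simps)
  qed
  also have "\<dots> = exp (- a) * (\<Sum>x\<in>slice_vectors n d. exp (h x)) ^ m"
    by (simp add: sum_distrib_left[symmetric] sum_exp_PiE)
  finally show ?thesis .
qed

definition Sig :: "nat \<Rightarrow> (nat \<Rightarrow> real) set" where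
  "Sig n = PiE {..<n} (\<lambda>_. {-1, 1})"

lemma card_Sig: "card (Sig n) = 2 ^ n"
  unfolding Sig_def by (simp add: card_PiE numeral_2_eq_2)

lemma finite_Sig: "finite (Sig n)"
  unfolding Sig_def by (intro finite_PiE) auto

lemma event1:
  assumes "1 \<le> d" "d \<le> n" "0 < n" "\<sigma> \<in> Sig n"
  shows "real (card {M \<in> slice_matrices m n d. 20 * real m * sqrt n \<le> (\<Sum>i<m. \<bar>Yf n (real d / real n) \<sigma> (M i)\<bar>)})
     \<le> exp (- 8 * real m) * real (card (slice_matrices m n d))"
proof -
  define u where "u = 1 / (2 * sqrt n)"
  have u0: "0 < u" using assms unfolding u_def by simp
  have sj: "\<sigma> j = 1 \<or> \<sigma> j = -1" if "j < n" for j using assms(4) that unfolding Sig_def by auto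
  have bj: "2 * u * \<bar>\<sigma> j\<bar> \<le> 1" if "j < n" for j
  proof -
    have "1 \<le> sqrt (real n)" using assms by simp
    then show ?thesis using sj[OF that] unfolding u_def by auto
  qed
  have ss: "(\<Sum>j<n. (\<sigma> j)\<^sup>2) = real n" 
  proof -
    have "(\<Sum>j<n. (\<sigma> j)\<^sup>2) = (\<Sum>j<n. 1)" by (rule sum.cong[OF refl]) (use sj in fastforce)
    then show ?thesis by simp
  qed
  have mg: "(\<Sum>x\<in>slice_vectors n d. exp (u * \<bar>Yf n (real d / real n) \<sigma> x\<bar>)) \<le> 2 * real (n choose d) * exp 1"
  proof -
    have "4 * u\<^sup>2 * real n = 1" using assms unfolding u_def by (simp add: power_divide power_mult_distrib)
    then show ?thesis using mgf_abs[OF assms(1,2) less_imp_le[OF u0], of \<sigma>] bj unfolding ss by simp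
  qed
  have "{M \<in> slice_matrices m n d. 20 * real m * sqrt n \<le> (\<Sum>i<m. \<bar>Yf n (real d / real n) \<sigma> (M i)\<bar>)}
      = {M \<in> slice_matrices m n d. u * (20 * real m * sqrt n) \<le> (\<Sum>i<m. u * \<bar>Yf n (real d / real n) \<sigma> (M i)\<bar>)}"
    using u0 by (simp add: sum_distrib_left[symmetric] mult.assoc)
  then have "real (card {M \<in> slice_matrices m n d. 20 * real m * sqrt n \<le> (\<Sum>i<m. \<bar>Yf n (real d / real n) \<sigma> (M i)\<bar>)})
      \<le> exp (- (u * (20 * real m * sqrt n))) * (\<Sum>x\<in>slice_vectors n d. exp (u * \<bar>Yf n (real d / real n) \<sigma> x\<bar>)) ^ m"
    using chernoff[where a = "u * (20 * real m * sqrt n)" and m = m and h = "\<lambda>x. u * \<bar>Yf n (real d / real n) \<sigma> x\<bar>" and n = n and d = d] by simp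
  also have "\<dots> \<le> exp (- (u * (20 * real m * sqrt n))) * (2 * real (n choose d) * exp 1) ^ m"
    by (intro mult_left_mono power_mono mg) (auto intro: sum_nonneg)
  also have "u * (20 * real m * sqrt n) = 10 * real m" using assms unfolding u_def by simp
  also have "(2 * real (n choose d) * exp 1) ^ m \<le> (exp 2 * real (n choose d)) ^ m"
  proof (intro power_mono)
    have "2 * exp 1 \<le> exp 1 * (exp 1::real)" using exp_ge_add_one_self[of "1::real"] by (intro mult_right_mono) auto
    then show "2 * real (n choose d) * exp 1 \<le> exp 2 * real (n choose d)"
    proof -
      have "2 * exp 1 \<le> exp (2::real)" using \<open>2 * exp 1 \<le> exp 1 * exp 1\<close> by (simp add: exp_add[symmetric])
      then have "(2 * exp 1) * real (n choose d) \<le> exp 2 * real (n choose d)" by (intro mult_right_mono) auto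
      then show ?thesis by (simp add: ac_simps)
    qed
  qed simp
  also have "exp (- (10 * real m)) * (exp 2 * real (n choose d)) ^ m = exp (- 8 * real m) * real (card (slice_matrices m n d))"
    by (simp add: card_slice_matrices power_mult_distrib exp_of_nat_mult[symmetric] exp_add[symmetric])
  finally show ?thesis by simp
qed


lemma exp_neg1_le: "exp (- 1::real) \<le> 1 / 2"
proof -
  have "2 \<le> exp (1::real)" using exp_ge_add_one_self[of "1::real"] by simp
  then show ?thesis by (simp add: exp_minus field_simps)
qed

lemma event2:
  assumes d2: "2 \<le> d" "d < n"
    and s2: "1/4 \<le> (\<Sum>j<n. (b j)\<^sup>2)"
    and l1: "(\<Sum>j<n. \<bar>b j\<bar>)\<^sup>2 \<le> real n / 64"
  defines "p \<equiv> real d / real n"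
  defines "q \<equiv> p * (1 - p)"
  defines "\<tau> \<equiv> sqrt q / 4"
  defines "\<eta> \<equiv> q\<^sup>2 / 10^8"
  shows "real (card {M \<in> slice_matrices m n d. (\<Sum>i<m. \<bar>(\<Sum>j<n. M i j * b j) - t\<bar>) \<le> 2 * (\<eta> * \<tau> / 8) * real m})
     \<le> exp (- \<eta> * real m / 4) * real (card (slice_matrices m n d))"
proof -
  let ?S = "slice_vectors n d"
  define N where "N = real (n choose d)"
  define t' where "t' = t - p * (\<Sum>j<n. b j)"
  define h where "h x = - \<bar>(\<Sum>j<n. x j * b j) - t\<bar> / \<tau>" for x :: "nat \<Rightarrow> real"
  define G where "G = {x \<in> ?S. q / 16 \<le> (Yf n p b x - t')\<^sup>2}"
  have p01: "0 < p" "p < 1" using d2 unfolding p_def by auto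
  have q0: "0 < q" unfolding q_def using p01 by simp
  have t0: "0 < \<tau>" unfolding \<tau>_def using q0 by simp
  have N0: "0 < N" unfolding N_def using d2 by simp
  have fS: "finite ?S" by (rule finite_slice)
  have cG: "\<eta> * N \<le> real (card G)"
    using levy[OF d2 _ s2 l1, of p t'] p_def unfolding G_def \<eta>_def q_def N_def by simp
  have hx: "(\<Sum>j<n. x j * b j) - t = Yf n p b x - t'" for x
    unfolding Yf_split t'_def by (simp add: mult.commute)
  have pt: "exp (h x) \<le> (if x \<in> G then 1 / 2 else 1)" if x: "x \<in> ?S" for x
  proof (cases "x \<in> G")
    case True
    then have "q / 16 \<le> (Yf n p b x - t')\<^sup>2" unfolding G_def by simp
    moreover have "q / 16 = \<tau>\<^sup>2" unfolding \<tau>_def using q0 by (simp add: power_divide)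
    ultimately have "\<tau> \<le> \<bar>Yf n p b x - t'\<bar>" using t0 abs_le_square_iff[of \<tau> "Yf n p b x - t'"] by simp
    then have "h x \<le> - 1" unfolding h_def hx using t0 by (simp add: field_simps)
    then have "exp (h x) \<le> exp (- 1)" by simp
    then have "exp (h x) \<le> 1 / 2" using exp_neg1_le by linarith
    then show ?thesis using True by simp
  next
    case False
    have "h x \<le> 0" unfolding h_def using t0 by simp
    then show ?thesis using False by simp
  qed
  have sh: "(\<Sum>x\<in>?S. exp (h x)) \<le> N * exp (- \<eta> / 2)"
  proof -
    have "(\<Sum>x\<in>?S. exp (h x)) \<le> (\<Sum>x\<in>?S. (if x \<in> G then 1 / 2 else 1))"
      using pt by (rule sum_mono)
    also have "(\<Sum>x\<in>?S. (if x \<in> G then 1 / 2 else 1)) = (\<Sum>x\<in>?S. 1 - (if x \<in> G then 1 else 0) / (2::real))"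
      by (rule sum.cong) auto
    also have "\<dots> = N - real (card G) / 2"
    proof -
      have "(\<Sum>x\<in>?S. (if x \<in> G then 1 else 0)) = real (card {x \<in> ?S. x \<in> G})"
        by (rule card_filter_sum[OF fS])
      moreover have "{x \<in> ?S. x \<in> G} = G" unfolding G_def by auto
      ultimately show ?thesis
        by (simp add: sum_subtractf sum_divide_distrib[symmetric] N_def card_slice)
    qed
    also have "\<dots> \<le> N * (1 - \<eta> / 2)" using cG by (simp add: algebra_simps)
    also have "\<dots> \<le> N * exp (- \<eta> / 2)" using N0 exp_ge_add_one_self[of "- \<eta> / 2"] by (intro mult_left_mono) auto
    finally show ?thesis .
  qed
  have "{M \<in> slice_matrices m n d. (\<Sum>i<m. \<bar>(\<Sum>j<n. M i j * b j) - t\<bar>) \<le> 2 * (\<eta> * \<tau> / 8) * real m}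
      = {M \<in> slice_matrices m n d. - (\<eta> * real m / 4) \<le> (\<Sum>i<m. h (M i))}"
  proof -
    have "(\<Sum>i<m. \<bar>(\<Sum>j<n. M i j * b j) - t\<bar>) \<le> 2 * (\<eta> * \<tau> / 8) * real m
        \<longleftrightarrow> - (\<eta> * real m / 4) \<le> (\<Sum>i<m. h (M i))" for M
    proof -
      define A where "A = (\<Sum>i<m. \<bar>(\<Sum>j<n. M i j * b j) - t\<bar>)"
      have e: "(\<Sum>i<m. h (M i)) = - (A / \<tau>)"
        unfolding h_def A_def by (simp add: sum_negf sum_divide_distrib)
      have "- (\<eta> * real m / 4) \<le> - (A / \<tau>) \<longleftrightarrow> A / \<tau> \<le> \<eta> * real m / 4" by linarith
      also have "\<dots> \<longleftrightarrow> A \<le> \<eta> * real m / 4 * \<tau>" using t0 by (simp add: divide_le_eq)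
      also have "\<eta> * real m / 4 * \<tau> = 2 * (\<eta> * \<tau> / 8) * real m" by (simp add: algebra_simps)
      finally show ?thesis unfolding e A_def by simp
    qed
    then show ?thesis by simp
  qed
  then have "real (card {M \<in> slice_matrices m n d. (\<Sum>i<m. \<bar>(\<Sum>j<n. M i j * b j) - t\<bar>) \<le> 2 * (\<eta> * \<tau> / 8) * real m})
      \<le> exp (\<eta> * real m / 4) * (\<Sum>x\<in>?S. exp (h x)) ^ m"
    using chernoff[where a = "- (\<eta> * real m / 4)" and m = m and h = h and n = n and d = d] by simp
  also have "\<dots> \<le> exp (\<eta> * real m / 4) * (N * exp (- \<eta> / 2)) ^ m"
    by (intro mult_left_mono power_mono sh) (auto intro: sum_nonneg)
  also have "\<dots> = exp (- \<eta> * real m / 4) * N ^ m"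
    by (simp add: power_mult_distrib exp_of_nat_mult[symmetric] exp_add[symmetric] field_simps)
  finally show ?thesis unfolding N_def card_slice_matrices by simp
qed


definition netmap :: "nat \<Rightarrow> real \<Rightarrow> nat list \<Rightarrow> nat \<Rightarrow> real" where
  "netmap n \<epsilon> l = (\<lambda>j. if j < n then \<epsilon> / sqrt n * (real (l ! j) - real (l ! (n + j))) else 0)"

definition lists_sum :: "nat \<Rightarrow> nat \<Rightarrow> nat list set" where
  "lists_sum k L = {l. length l = k \<and> sum_list l = L}"

definition net :: "nat \<Rightarrow> nat \<Rightarrow> real \<Rightarrow> (nat \<Rightarrow> real) set" where
  "net n L \<epsilon> = netmap n \<epsilon> ` lists_sum (2 * n + 1) L"

lemma finite_lists_sum: "finite (lists_sum k L)"
proof (rule finite_subset)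
  show "lists_sum k L \<subseteq> {xs. set xs \<subseteq> {..L} \<and> length xs = k}"
    unfolding lists_sum_def using member_le_sum_list by fastforce
  show "finite {xs. set xs \<subseteq> {..L} \<and> length xs = k}" by (rule finite_lists_length_eq) simp
qed

lemma finite_net: "finite (net n L \<epsilon>)"
  unfolding net_def using finite_lists_sum by simp

lemma card_net: "card (net n L \<epsilon>) \<le> (L + 2 * n) choose L"
proof -
  have "card (net n L \<epsilon>) \<le> card (lists_sum (2 * n + 1) L)"
    unfolding net_def by (rule card_image_le[OF finite_lists_sum])
  also have "\<dots> = (L + 2 * n) choose L"
    unfolding lists_sum_def using card_length_sum_list[of "2 * n + 1" L] by simp
  finally show ?thesis .
qed

lemma choose_fact_le: "real (N choose k) * fact k \<le> real N ^ k"
proof (cases "k \<le> N")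
  case True
  have "fact k * fact (N - k) * (N choose k) = (fact N :: nat)" using binomial_fact_lemma[OF True] .
  then have "fact N = (fact k * (N choose k)) * (fact (N - k) :: nat)" by (simp add: ac_simps)
  then have "fact N div fact (N - k) = fact k * (N choose k)"
    by (simp add: nonzero_mult_div_cancel_right)
  then have "fact k * (N choose k) \<le> N ^ k" using fact_div_fact_le_pow[OF True] by simp
  then have "real (fact k * (N choose k)) \<le> real (N ^ k)" by (simp only: of_nat_le_iff)
  then show ?thesis by (simp add: mult.commute)
next
  case False
  then have "N choose k = 0" by simp
  then show ?thesis by (simp del: binomial_eq_0_iff)
qed

lemma pow_fact_le_exp: "0 \<le> (x::real) \<Longrightarrow> x ^ k / fact k \<le> exp x"
proof -
  assume x: "0 \<le> x"
  have s: "(\<lambda>n. x ^ n /\<^sub>R fact n) sums exp x" by (rule exp_converges)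
  have sm: "summable (\<lambda>n. x ^ n /\<^sub>R fact n)" using s by (rule sums_summable)
  have "sum (\<lambda>n. x ^ n /\<^sub>R fact n) {k} \<le> suminf (\<lambda>n. x ^ n /\<^sub>R fact n)"
    using x by (intro sum_le_suminf[OF sm]) auto
  then show ?thesis using sums_unique[OF s] by (simp add: divide_inverse mult.commute)
qed

lemma card_net_exp:
  assumes "L \<le> n" "0 < \<gamma>" "\<gamma> \<le> 3" "0 < n"
  shows "real (card (net n L \<epsilon>)) \<le> (3 / \<gamma>) ^ L * exp (\<gamma> * real n)"
proof -
  have "real (card (net n L \<epsilon>)) \<le> real ((L + 2 * n) choose L)" using card_net by simp
  also have "\<dots> \<le> real (L + 2 * n) ^ L / fact L"
    using choose_fact_le[of "L + 2 * n" L] by (simp add: field_simps)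
  also have "\<dots> \<le> (3 * real n) ^ L / fact L"
    using assms by (intro divide_right_mono power_mono) auto
  also have "(3 * real n) ^ L / fact L = (3 / \<gamma>) ^ L * ((\<gamma> * real n) ^ L / fact L)"
    using assms by (simp add: power_mult_distrib power_divide field_simps)
  also have "\<dots> \<le> (3 / \<gamma>) ^ L * exp (\<gamma> * real n)"
    using assms by (intro mult_left_mono pow_fact_le_exp) auto
  finally show ?thesis .
qed

lemma net_l1:
  assumes "b \<in> net n L \<epsilon>" "0 \<le> \<epsilon>"
  shows "(\<Sum>j<n. \<bar>b j\<bar>) \<le> \<epsilon> / sqrt n * real L"
proof -
  obtain l where l: "length l = 2 * n + 1" "sum_list l = L" and b: "b = netmap n \<epsilon> l"
    using assms unfolding net_def lists_sum_def by auto
  have "(\<Sum>j<n. \<bar>b j\<bar>) \<le> (\<Sum>j<n. \<epsilon> / sqrt n * (real (l ! j) + real (l ! (n + j))))"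
  proof (rule sum_mono)
    fix j assume "j \<in> {..<n}"
    then have bj: "b j = \<epsilon> / sqrt n * (real (l ! j) - real (l ! (n + j)))" unfolding b netmap_def by simp
    have "\<bar>real (l ! j) - real (l ! (n + j))\<bar> \<le> real (l ! j) + real (l ! (n + j))" by (simp add: abs_le_iff)
    then have "\<epsilon> / sqrt n * \<bar>real (l ! j) - real (l ! (n + j))\<bar> \<le> \<epsilon> / sqrt n * (real (l ! j) + real (l ! (n + j)))"
      using assms(2) by (intro mult_left_mono) auto
    then show "\<bar>b j\<bar> \<le> \<epsilon> / sqrt n * (real (l ! j) + real (l ! (n + j)))"
      unfolding bj using assms(2) by (simp add: abs_mult)
  qed
  also have "\<dots> = \<epsilon> / sqrt n * (\<Sum>j<n. real (l ! j) + real (l ! (n + j)))"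
    by (simp add: sum_distrib_left)
  also have "(\<Sum>j<n. real (l ! j) + real (l ! (n + j))) \<le> real L"
  proof -
    have "(\<Sum>j<n. real (l ! j) + real (l ! (n + j))) = (\<Sum>i<2 * n. real (l ! i))"
    proof -
      have "(\<Sum>j<n. real (l ! (n + j))) = (\<Sum>i\<in>{n..<2 * n}. real (l ! i))"
        using sum.shift_bounds_nat_ivl[of "\<lambda>i. real (l ! i)" 0 n n] by (simp add: atLeast0LessThan add.commute mult_2)
      moreover have "(\<Sum>i<n. real (l ! i)) + (\<Sum>i\<in>{n..<2 * n}. real (l ! i)) = (\<Sum>i<2 * n. real (l ! i))"
        using sum.atLeastLessThan_concat[of 0 n "2 * n" "\<lambda>i. real (l ! i)"] by (simp add: atLeast0LessThan)
      ultimately show ?thesis by (simp add: sum.distrib)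
    qed
    also have "\<dots> \<le> (\<Sum>i<2 * n + 1. real (l ! i))" by (intro sum_mono2) auto
    also have "\<dots> = real (sum_list l)"
      using l(1) by (simp add: sum_list_sum_nth atLeast0LessThan)
    finally show ?thesis using l(2) by simp
  qed
  then have "\<epsilon> / sqrt n * (\<Sum>j<n. real (l ! j) + real (l ! (n + j))) \<le> \<epsilon> / sqrt n * real L"
    using assms(2) by (intro mult_left_mono) auto
  finally show ?thesis .
qed

lemma nat_floor_le: "0 \<le> (y::real) \<Longrightarrow> real (nat \<lfloor>y\<rfloor>) \<le> y"
proof -
  assume y: "0 \<le> y"
  then have "0 \<le> \<lfloor>y\<rfloor>" by simp
  then have "real (nat \<lfloor>y\<rfloor>) = real_of_int \<lfloor>y\<rfloor>" by simp
  then show ?thesis using of_int_floor_le[of y] by simp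
qed

lemma round_net:
  assumes e0: "0 < \<epsilon>" and n0: "0 < n" and sm: "(\<Sum>j<n. \<bar>w j\<bar>) * sqrt n / \<epsilon> < real L + 1"
  shows "\<exists>b \<in> net n L \<epsilon>. (\<forall>j<n. \<bar>w j - b j\<bar> \<le> \<epsilon> / sqrt n) \<and> (\<forall>j<n. w j = 0 \<longrightarrow> b j = 0)"
proof -
  define r where "r = sqrt n / \<epsilon>"
  have r0: "0 < r" unfolding r_def using e0 n0 by simp
  define a where "a j = nat \<lfloor>max (w j) 0 * r\<rfloor>" for j
  define c where "c j = nat \<lfloor>max (- w j) 0 * r\<rfloor>" for j
  have ac: "real (a j) + real (c j) \<le> \<bar>w j\<bar> * r" for j
  proof (cases "0 \<le> w j")
    case True
    then have "real (a j) \<le> w j * r" "c j = 0" unfolding a_def c_def using r0 nat_floor_le[of "w j * r"] by (auto simp: max_def)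
    then show ?thesis using True by simp
  next
    case False
    have wr: "0 \<le> - (w j * r)" using False r0 by (simp add: mult_neg_pos less_imp_le)
    from False have "real (c j) \<le> - w j * r" "a j = 0" unfolding a_def c_def using r0 nat_floor_le[OF wr] by (auto simp: max_def)
    then show ?thesis using False by simp
  qed
  have acd: "\<bar>w j * r - (real (a j) - real (c j))\<bar> \<le> 1" for j
  proof (cases "0 \<le> w j")
    case True
    then have "c j = 0" "real (a j) = of_int \<lfloor>w j * r\<rfloor>" unfolding a_def c_def using r0 by (auto simp: max_def)
    then show ?thesis by (simp add: abs_le_iff) linarith
  next
    case False
    have wr: "0 \<le> - (w j * r)" using False r0 by (simp add: mult_neg_pos less_imp_le)
    then have "0 \<le> \<lfloor>- (w j * r)\<rfloor>" by simp
    with False have "a j = 0" "real (c j) = of_int \<lfloor>- w j * r\<rfloor>" unfolding a_def c_def using r0 by (auto simp: max_def)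
    then show ?thesis by (simp add: abs_le_iff) linarith
  qed
  define A where "A = (\<Sum>j<n. a j + c j)"
  have "real A \<le> (\<Sum>j<n. \<bar>w j\<bar>) * r" unfolding A_def using ac by (simp add: sum_distrib_right sum_mono)
  then have "real A < real L + 1" using sm unfolding r_def by simp
  then have AL: "A \<le> L" by linarith
  define l where "l = map a [0..<n] @ map c [0..<n] @ [L - A]"
  have len: "length l = 2 * n + 1" unfolding l_def by simp
  have sl: "sum_list l = L"
  proof -
    have "sum_list l = (\<Sum>j<n. a j) + (\<Sum>j<n. c j) + (L - A)"
      unfolding l_def by (simp add: sum_set_upt_conv_sum_list_nat[symmetric] atLeast0LessThan)
    then show ?thesis using AL unfolding A_def by (simp add: sum.distrib)
  qed
  have la: "l ! j = a j" "l ! (n + j) = c j" if "j < n" for j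
    using that unfolding l_def by (auto simp: nth_append)
  define b where "b = netmap n \<epsilon> l"
  have bin: "b \<in> net n L \<epsilon>" unfolding b_def net_def lists_sum_def using len sl by auto
  have bj: "b j = (real (a j) - real (c j)) / r" if "j < n" for j
    unfolding b_def netmap_def r_def using that la[OF that] by simp
  show ?thesis
  proof (intro bexI[OF _ bin] conjI allI impI)
    fix j assume j: "j < n"
    have "w j - b j = (w j * r - (real (a j) - real (c j))) / r"
      unfolding bj[OF j] using r0 by (simp add: diff_divide_distrib)
    then have "\<bar>w j - b j\<bar> = \<bar>w j * r - (real (a j) - real (c j))\<bar> / r"
      using r0 by simp
    also have "\<dots> \<le> 1 / r" using acd r0 by (intro divide_right_mono) auto
    finally show "\<bar>w j - b j\<bar> \<le> \<epsilon> / sqrt n" unfolding r_def by simp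
  next
    fix j assume j: "j < n" and "w j = 0"
    then have "a j = 0" "c j = 0" unfolding a_def c_def by auto
    then show "b j = 0" using bj[OF j] by simp
  qed
qed


lemma sign_bound:
  fixes y :: "nat \<Rightarrow> nat \<Rightarrow> real"
  assumes "\<And>j. j < n \<Longrightarrow> \<bar>e j\<bar> \<le> h"
  shows "\<exists>\<sigma>\<in>Sig n. (\<Sum>i<m. \<bar>\<Sum>j<n. y i j * e j\<bar>) \<le> h * (\<Sum>i<m. \<bar>\<Sum>j<n. y i j * \<sigma> j\<bar>)"
proof -
  define \<tau> where "\<tau> i = sgn (\<Sum>j<n. y i j * e j)" for i
  define c where "c j = (\<Sum>i<m. \<tau> i * y i j)" for j
  define \<sigma> where "\<sigma> j = (if j < n then (if 0 \<le> c j then (1::real) else -1) else undefined)" for j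
  have sig: "\<sigma> \<in> Sig n" unfolding Sig_def \<sigma>_def by (auto simp: PiE_iff extensional_def split: if_splits)
  show ?thesis
  proof (cases "n = 0")
    case True then show ?thesis using sig by auto
  next
    case False
    then have h0: "0 \<le> h" using assms[of 0] by auto
    have "(\<Sum>i<m. \<bar>\<Sum>j<n. y i j * e j\<bar>) = (\<Sum>i<m. \<tau> i * (\<Sum>j<n. y i j * e j))"
      unfolding \<tau>_def by (simp add: abs_sgn mult.commute)
    also have "\<dots> = (\<Sum>j<n. e j * c j)"
      unfolding c_def by (simp add: sum_distrib_left sum_distrib_right sum.swap[of _ "{..<m}"] ac_simps)
    also have "\<dots> \<le> (\<Sum>j<n. h * \<bar>c j\<bar>)"
    proof (rule sum_mono)
      fix j assume j: "j \<in> {..<n}"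
      have "e j * c j \<le> \<bar>e j\<bar> * \<bar>c j\<bar>" by (simp add: abs_mult[symmetric])
      also have "\<dots> \<le> h * \<bar>c j\<bar>" using assms j by (intro mult_right_mono) auto
      finally show "e j * c j \<le> h * \<bar>c j\<bar>" .
    qed
    also have "(\<Sum>j<n. h * \<bar>c j\<bar>) = h * (\<Sum>j<n. \<sigma> j * c j)"
      unfolding \<sigma>_def sum_distrib_left by (rule sum.cong) (auto simp: abs_if)
    finally have A: "(\<Sum>i<m. \<bar>\<Sum>j<n. y i j * e j\<bar>) \<le> h * (\<Sum>j<n. \<sigma> j * c j)" .
    have "(\<Sum>j<n. \<sigma> j * c j) = (\<Sum>i<m. \<tau> i * (\<Sum>j<n. y i j * \<sigma> j))"
      unfolding c_def by (simp add: sum_distrib_left sum_distrib_right sum.swap[of _ "{..<m}"] ac_simps)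
    also have "\<dots> \<le> (\<Sum>i<m. \<bar>\<Sum>j<n. y i j * \<sigma> j\<bar>)"
    proof (rule sum_mono)
      fix i
      show "\<tau> i * (\<Sum>j<n. y i j * \<sigma> j) \<le> \<bar>\<Sum>j<n. y i j * \<sigma> j\<bar>"
        unfolding \<tau>_def by (cases "(\<Sum>j<n. y i j * e j)" "0::real" rule: linorder_cases) (auto simp: sgn_if)
    qed
    finally have B: "(\<Sum>j<n. \<sigma> j * c j) \<le> (\<Sum>i<m. \<bar>\<Sum>j<n. y i j * \<sigma> j\<bar>)" .
    have "(\<Sum>i<m. \<bar>\<Sum>j<n. y i j * e j\<bar>) \<le> h * (\<Sum>i<m. \<bar>\<Sum>j<n. y i j * \<sigma> j\<bar>)"
      using A mult_left_mono[OF B h0] by linarith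
    then show ?thesis using sig by blast
  qed
qed

lemma l1_l2:
  fixes a :: "nat \<Rightarrow> real"
  shows "(\<Sum>i\<in>I. \<bar>a i\<bar>) \<le> sqrt (real (card I)) * sqrt (\<Sum>i\<in>I. (a i)\<^sup>2)"
proof -
  have "(\<Sum>i\<in>I. \<bar>a i\<bar> * 1)\<^sup>2 \<le> (\<Sum>i\<in>I. \<bar>a i\<bar>\<^sup>2) * (\<Sum>i\<in>I. 1\<^sup>2)"
    by (rule Cauchy_Schwarz_ineq_sum)
  then have "(\<Sum>i\<in>I. \<bar>a i\<bar>)\<^sup>2 \<le> real (card I) * (\<Sum>i\<in>I. (a i)\<^sup>2)" by (simp add: mult.commute)
  then have "sqrt ((\<Sum>i\<in>I. \<bar>a i\<bar>)\<^sup>2) \<le> sqrt (real (card I) * (\<Sum>i\<in>I. (a i)\<^sup>2))"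
    by (rule real_sqrt_le_mono)
  moreover have "0 \<le> (\<Sum>i\<in>I. \<bar>a i\<bar>)" by (simp add: sum_nonneg)
  ultimately show ?thesis by (simp add: real_sqrt_mult)
qed

definition Tg :: "real \<Rightarrow> nat \<Rightarrow> real set" where
  "Tg \<kappa> n = (\<lambda>j. \<kappa> * real_of_int j) ` {- \<lceil>sqrt n / \<kappa>\<rceil> .. \<lceil>sqrt n / \<kappa>\<rceil>}"

lemma finite_Tg: "finite (Tg \<kappa> n)" unfolding Tg_def by simp

lemma card_Tg: assumes "0 < \<kappa>" shows "real (card (Tg \<kappa> n)) \<le> 2 * sqrt n / \<kappa> + 3"
proof -
  define J where "J = \<lceil>sqrt n / \<kappa>\<rceil>"
  have "0 \<le> sqrt n / \<kappa>" using assms by simp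
  then have J0: "0 \<le> J" unfolding J_def by simp
  have "card (Tg \<kappa> n) \<le> card {-J..J}" unfolding Tg_def J_def by (rule card_image_le) simp
  also have "card {-J..J} = nat (2 * J + 1)" using J0 by simp
  finally have "real (card (Tg \<kappa> n)) \<le> real (nat (2 * J + 1))" by simp
  also have "real (nat (2 * J + 1)) = 2 * real_of_int J + 1" using J0 by simp
  also have "real_of_int J \<le> sqrt n / \<kappa> + 1" unfolding J_def by linarith
  finally show ?thesis by simp
qed

lemma Tg_approx:
  assumes "0 < \<kappa>" "\<bar>t0\<bar> \<le> sqrt n"
  shows "\<exists>t\<in>Tg \<kappa> n. \<bar>t - t0\<bar> \<le> \<kappa>"
proof -
  define j where "j = \<lfloor>t0 / \<kappa>\<rfloor>"
  have j1: "real_of_int j \<le> t0 / \<kappa>" "t0 / \<kappa> < real_of_int j + 1" unfolding j_def by linarith+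
  have b1: "t0 / \<kappa> \<le> sqrt n / \<kappa>" "- (sqrt n / \<kappa>) \<le> t0 / \<kappa>"
  proof -
    show "t0 / \<kappa> \<le> sqrt n / \<kappa>" using assms by (intro divide_right_mono) auto
    have "- sqrt n / \<kappa> \<le> t0 / \<kappa>" using assms by (intro divide_right_mono) auto
    then show "- (sqrt n / \<kappa>) \<le> t0 / \<kappa>" by simp
  qed
  have "real_of_int j \<le> real_of_int \<lceil>sqrt n / \<kappa>\<rceil>" using j1 b1 le_of_int_ceiling[of "sqrt n / \<kappa>"] by linarith
  then have "j \<le> \<lceil>sqrt n / \<kappa>\<rceil>" by (simp only: of_int_le_iff)
  moreover have "- \<lceil>sqrt n / \<kappa>\<rceil> \<le> j"
  proof -
    have "- (sqrt n / \<kappa>) - 1 < real_of_int j" using j1 b1 by linarith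
    moreover have "real_of_int \<lceil>sqrt n / \<kappa>\<rceil> \<ge> sqrt n / \<kappa>" by (rule le_of_int_ceiling)
    ultimately have "- real_of_int \<lceil>sqrt n / \<kappa>\<rceil> - 1 < real_of_int j" by linarith
    then show ?thesis by linarith
  qed
  ultimately have jin: "\<kappa> * real_of_int j \<in> Tg \<kappa> n" unfolding Tg_def by auto
  have "\<kappa> * real_of_int j \<le> t0" "t0 < \<kappa> * real_of_int j + \<kappa>"
    using j1 assms(1) by (auto simp: field_simps)
  then have "\<bar>\<kappa> * real_of_int j - t0\<bar> \<le> \<kappa>" by simp
  then show ?thesis using jin by blast
qed


lemma sqrt_sum_mono:
  assumes "A \<subseteq> B" "finite B"
  shows "sqrt (\<Sum>j\<in>A. (f j)\<^sup>2) \<le> sqrt (\<Sum>j\<in>B. ((f j)::real)\<^sup>2)"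
  using assms by (intro real_sqrt_le_mono sum_mono2) auto

lemma Bpart:
  assumes "finite B"
  shows "sqrt (\<Sum>j\<in>B. (v j - lam)\<^sup>2) \<le> sqrt (\<Sum>j\<in>B. (v j)\<^sup>2) + \<bar>lam\<bar> * sqrt (real (card B))"
    and "sqrt (\<Sum>j\<in>B. (v j)\<^sup>2) - \<bar>lam\<bar> * sqrt (real (card B)) \<le> sqrt (\<Sum>j\<in>B. (v j - lam)\<^sup>2)"
proof -
  have t1: "L2_set (\<lambda>j. v j + (- lam)) B \<le> L2_set v B + L2_set (\<lambda>j. - lam) B"
    by (rule L2_set_triangle_ineq)
  have t2: "L2_set (\<lambda>j. (v j - lam) + lam) B \<le> L2_set (\<lambda>j. v j - lam) B + L2_set (\<lambda>j. lam) B"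
    by (rule L2_set_triangle_ineq)
  have c1: "L2_set (\<lambda>j. - lam) B = \<bar>lam\<bar> * sqrt (real (card B))" "L2_set (\<lambda>j. lam) B = \<bar>lam\<bar> * sqrt (real (card B))"
    by (simp_all add: L2_set_constant mult.commute)
  show "sqrt (\<Sum>j\<in>B. (v j - lam)\<^sup>2) \<le> sqrt (\<Sum>j\<in>B. (v j)\<^sup>2) + \<bar>lam\<bar> * sqrt (real (card B))"
    using t1 unfolding c1 by (simp add: L2_set_def)
  show "sqrt (\<Sum>j\<in>B. (v j)\<^sup>2) - \<bar>lam\<bar> * sqrt (real (card B)) \<le> sqrt (\<Sum>j\<in>B. (v j - lam)\<^sup>2)"
    using t2 unfolding c1 by (simp add: L2_set_def)
qed

lemma lam_bound:
  assumes vs: "(\<Sum>j<n. (v j)\<^sup>2) = 1" and G: "G \<subseteq> {..<n}"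
    and Gb: "\<And>j. j \<in> G \<Longrightarrow> \<bar>v j - lam\<bar> \<le> \<rho> / sqrt n"
    and cG: "real n / 2 \<le> real (card G)" and r: "0 \<le> \<rho>" "\<rho> \<le> 1/16" and n0: "0 < n"
  shows "\<bar>lam\<bar> * sqrt n \<le> 2"
proof (rule ccontr)
  assume "\<not> \<bar>lam\<bar> * sqrt n \<le> 2"
  then have l2: "2 < \<bar>lam\<bar> * sqrt n" by simp
  have sn: "0 < sqrt n" using n0 by simp
  have vj: "(15/8)\<^sup>2 / real n \<le> (v j)\<^sup>2" if j: "j \<in> G" for j
  proof -
    have "\<bar>lam\<bar> - \<rho> / sqrt n \<le> \<bar>v j\<bar>" using Gb[OF j] by linarith
    moreover have "15/8 / sqrt n \<le> \<bar>lam\<bar> - \<rho> / sqrt n"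
    proof -
      have "15/8 \<le> \<bar>lam\<bar> * sqrt n - \<rho>" using l2 r by linarith
      then have "15/8 / sqrt n \<le> (\<bar>lam\<bar> * sqrt n - \<rho>) / sqrt n" using sn by (intro divide_right_mono) auto
      then show ?thesis using sn by (simp add: diff_divide_distrib)
    qed
    ultimately have "15/8 / sqrt n \<le> \<bar>v j\<bar>" by linarith
    then have "(15/8 / sqrt n)\<^sup>2 \<le> \<bar>v j\<bar>\<^sup>2" using sn by (intro power_mono) auto
    then show ?thesis using n0 by (simp add: power_divide)
  qed
  have "real (card G) * ((15/8)\<^sup>2 / real n) \<le> (\<Sum>j\<in>G. (v j)\<^sup>2)"
    using sum_mono[OF vj, of G] by simp
  also have "\<dots> \<le> (\<Sum>j<n. (v j)\<^sup>2)" using G by (intro sum_mono2) auto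
  finally have "real (card G) * ((15/8)\<^sup>2 / real n) \<le> 1" using vs by simp
  moreover have "real n / 2 * ((15/8)\<^sup>2 / real n) \<le> real (card G) * ((15/8)\<^sup>2 / real n)"
    using cG by (intro mult_right_mono) auto
  moreover have "real n / 2 * ((15/8)\<^sup>2 / real n) = 225 / 128" using n0 by (simp add: power2_eq_square)
  ultimately show False by linarith
qed

lemma caseA:
  assumes x: "x \<in> slice_vectors n d" and dp: "real d = p * real n" and p0: "0 < p" and n0: "0 < n"
    and vs: "(\<Sum>j<n. (v j)\<^sup>2) = 1" and G: "G \<subseteq> {..<n}"
    and Gb: "\<And>j. j \<in> G \<Longrightarrow> \<bar>v j - lam\<bar> \<le> \<rho> / sqrt n"
    and cB: "real (card ({..<n} - G)) \<le> \<delta> * real n" and d0: "0 \<le> \<delta>"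
    and cG: "real n / 2 \<le> real (card G)" and r: "0 \<le> \<rho>" "\<rho> \<le> 1/16"
    and la: "1/4 \<le> \<bar>lam\<bar> * sqrt n" and small: "p * \<rho> + 3 * sqrt \<delta> \<le> p / 8"
  shows "p * sqrt n / 8 \<le> \<bar>\<Sum>j<n. x j * v j\<bar>"
proof -
  define B where "B = {..<n} - G"
  have fB: "finite B" unfolding B_def by simp
  have sn: "0 < sqrt n" using n0 by simp
  have lb: "\<bar>lam\<bar> * sqrt n \<le> 2" by (rule lam_bound[OF vs G Gb cG r n0])
  have x01: "\<And>j. x j = 0 \<or> x j = 1" using slice_vals[OF x] .
  have x0: "\<And>j. 0 \<le> x j" using x01 by (metis order_refl zero_le_one)
  have rs: "(\<Sum>j<n. x j) = real d" by (rule slice_rowsum[OF x])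
  have split: "(\<Sum>j<n. x j * v j) = lam * real d + (\<Sum>j\<in>G. x j * (v j - lam)) + (\<Sum>j\<in>B. x j * (v j - lam))"
  proof -
    have "(\<Sum>j<n. x j * v j) = lam * (\<Sum>j<n. x j) + (\<Sum>j<n. x j * (v j - lam))"
      by (simp add: sum_distrib_left sum.distrib[symmetric] algebra_simps)
    also have "(\<Sum>j<n. x j * (v j - lam)) = (\<Sum>j\<in>G. x j * (v j - lam)) + (\<Sum>j\<in>B. x j * (v j - lam))"
      unfolding B_def using G by (metis (no_types, lifting) finite_lessThan sum.subset_diff add.commute)
    finally show ?thesis using rs by simp
  qed
  have g: "\<bar>\<Sum>j\<in>G. x j * (v j - lam)\<bar> \<le> p * \<rho> * sqrt n"
  proof -
    have "\<bar>\<Sum>j\<in>G. x j * (v j - lam)\<bar> \<le> (\<Sum>j\<in>G. x j * (\<rho> / sqrt n))"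
    proof (intro order_trans[OF sum_abs] sum_mono)
      fix j assume j: "j \<in> G"
      have "x j * \<bar>v j - lam\<bar> \<le> x j * (\<rho> / sqrt n)" using mult_left_mono[OF Gb[OF j] x0[of j]] .
      then show "\<bar>x j * (v j - lam)\<bar> \<le> x j * (\<rho> / sqrt n)" using x0[of j] by (simp add: abs_mult)
    qed
    also have "\<dots> = (\<Sum>j\<in>G. x j) * (\<rho> / sqrt n)" by (rule sum_distrib_right[symmetric])
    also have "\<dots> \<le> real d * (\<rho> / sqrt n)"
    proof -
      have "(\<Sum>j\<in>G. x j) \<le> (\<Sum>j<n. x j)" using G x0 by (intro sum_mono2) auto
      then show ?thesis using rs r sn by (intro mult_right_mono) auto
    qed
    also have "real d * (\<rho> / sqrt n) = p * \<rho> * sqrt n"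
      using dp sn by (simp add: field_simps)
    finally show ?thesis .
  qed
  have bpart: "\<bar>\<Sum>j\<in>B. x j * (v j - lam)\<bar> \<le> 3 * sqrt \<delta> * sqrt n"
  proof -
    have "\<bar>\<Sum>j\<in>B. x j * (v j - lam)\<bar> \<le> (\<Sum>j\<in>B. \<bar>v j - lam\<bar>)"
    proof (intro order_trans[OF sum_abs] sum_mono)
      fix j show "\<bar>x j * (v j - lam)\<bar> \<le> \<bar>v j - lam\<bar>" using x01[of j] by auto
    qed
    also have "\<dots> \<le> sqrt (real (card B)) * sqrt (\<Sum>j\<in>B. (v j - lam)\<^sup>2)" by (rule l1_l2)
    also have "\<dots> \<le> sqrt (\<delta> * real n) * 3"
    proof (rule mult_mono)
      show "sqrt (real (card B)) \<le> sqrt (\<delta> * real n)" using cB unfolding B_def by simp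
      have "sqrt (\<Sum>j\<in>B. (v j - lam)\<^sup>2) \<le> sqrt (\<Sum>j\<in>B. (v j)\<^sup>2) + \<bar>lam\<bar> * sqrt (real (card B))"
        by (rule Bpart(1)[OF fB])
      also have "sqrt (\<Sum>j\<in>B. (v j)\<^sup>2) \<le> 1"
        using sqrt_sum_mono[of B "{..<n}" v] vs unfolding B_def by auto
      also have "\<bar>lam\<bar> * sqrt (real (card B)) \<le> \<bar>lam\<bar> * sqrt n"
      proof -
        have "card ({..<n} - G) \<le> card {..<n}" by (rule card_mono) auto
        then show ?thesis unfolding B_def by (intro mult_left_mono) auto
      qed
      finally show "sqrt (\<Sum>j\<in>B. (v j - lam)\<^sup>2) \<le> 3" using lb by linarith
    qed (use d0 in \<open>auto intro: sum_nonneg\<close>)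
    finally show ?thesis by (simp add: real_sqrt_mult mult_ac)
  qed
  have lam: "p * sqrt n / 4 \<le> \<bar>lam * real d\<bar>"
  proof -
    have "\<bar>lam * real d\<bar> = (\<bar>lam\<bar> * sqrt n) * (p * sqrt n)"
      using dp p0 by (simp add: abs_mult)
    moreover have "1/4 * (p * sqrt n) \<le> (\<bar>lam\<bar> * sqrt n) * (p * sqrt n)" using la p0 sn by (intro mult_right_mono) auto
    ultimately show ?thesis by simp
  qed
  have "p * sqrt n / 4 - p * \<rho> * sqrt n - 3 * sqrt \<delta> * sqrt n \<le> \<bar>\<Sum>j<n. x j * v j\<bar>"
    unfolding split using lam g bpart by linarith
  moreover have "p * sqrt n / 8 \<le> p * sqrt n / 4 - p * \<rho> * sqrt n - 3 * sqrt \<delta> * sqrt n"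
  proof -
    have "(p * \<rho> + 3 * sqrt \<delta>) * sqrt n \<le> p / 8 * sqrt n" using small sn by (intro mult_right_mono) auto
    then show ?thesis by (simp add: algebra_simps)
  qed
  ultimately show ?thesis by linarith
qed


lemma sqrt_ge_half_sq: "1/2 \<le> sqrt x \<Longrightarrow> 0 \<le> x \<Longrightarrow> 1/4 \<le> (x::real)"
proof -
  assume a: "1/2 \<le> sqrt x" "0 \<le> x"
  have "(1/2)\<^sup>2 \<le> (sqrt x)\<^sup>2" using a by (intro power_mono) auto
  then show ?thesis using a by (simp add: power2_eq_square)
qed

lemma caseB_net:
  assumes n0: "0 < n" and vs: "(\<Sum>j<n. (v j)\<^sup>2) = 1" and G: "G \<subseteq> {..<n}"
    and Gb: "\<And>j. j \<in> G \<Longrightarrow> \<bar>v j - lam\<bar> \<le> \<rho> / sqrt n"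
    and cB: "real (card ({..<n} - G)) \<le> \<delta> * real n" and d0: "0 \<le> \<delta>" "\<delta> \<le> 1/16"
    and r: "0 < \<rho>" "\<rho> \<le> 1/16" and la: "\<bar>lam\<bar> * sqrt n < 1/4"
    and Lb: "2 * sqrt \<delta> * real n / \<rho> < real L + 1"
  shows "\<exists>b\<in>net n L \<rho>. 1/4 \<le> (\<Sum>j<n. (b j)\<^sup>2) \<and> (\<forall>j<n. \<bar>v j - lam - b j\<bar> \<le> \<rho> / sqrt n)"
proof -
  define B where "B = {..<n} - G"
  have fB: "finite B" unfolding B_def by simp
  have Bn: "B \<subseteq> {..<n}" unfolding B_def by auto
  have sn: "0 < sqrt n" using n0 by simp
  have cBn: "sqrt (real (card B)) \<le> sqrt \<delta> * sqrt n"
    using cB unfolding B_def by (simp add: real_sqrt_mult[symmetric])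
  have lamB: "\<bar>lam\<bar> * sqrt (real (card B)) \<le> sqrt \<delta> / 4"
  proof -
    have "\<bar>lam\<bar> * sqrt (real (card B)) \<le> \<bar>lam\<bar> * (sqrt \<delta> * sqrt n)" using cBn by (intro mult_left_mono) auto
    also have "\<dots> = (\<bar>lam\<bar> * sqrt n) * sqrt \<delta>" by simp
    also have "\<dots> \<le> 1/4 * sqrt \<delta>" using la d0 by (intro mult_right_mono) auto
    finally show ?thesis by simp
  qed
  have sd: "sqrt \<delta> \<le> 1/4" using d0 real_sqrt_le_mono[of \<delta> "1/16"] by (simp add: real_sqrt_divide)
  have vB1: "sqrt (\<Sum>j\<in>B. (v j)\<^sup>2) \<le> 1" using sqrt_sum_mono[OF Bn, of v] vs by simp
  have sB: "sqrt (\<Sum>j\<in>B. (v j - lam)\<^sup>2) \<le> 5/4"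
    using Bpart(1)[OF fB, of v lam] vB1 lamB sd by linarith
  define w where "w j = (if j \<in> B then v j - lam else 0)" for j
  have wsum: "(\<Sum>j<n. f (w j)) = (\<Sum>j\<in>B. f (v j - lam)) + (\<Sum>j\<in>G. f 0)" for f :: "real \<Rightarrow> real"
  proof -
    have "(\<Sum>j<n. f (w j)) = (\<Sum>j\<in>B. f (w j)) + (\<Sum>j\<in>G. f (w j))"
      unfolding B_def using G by (metis (no_types, lifting) finite_lessThan sum.subset_diff)
    moreover have "(\<Sum>j\<in>B. f (w j)) = (\<Sum>j\<in>B. f (v j - lam))" unfolding w_def by simp
    moreover have "(\<Sum>j\<in>G. f (w j)) = (\<Sum>j\<in>G. f 0)" unfolding w_def B_def by simp
    ultimately show ?thesis by simp
  qed
  have wl1: "(\<Sum>j<n. \<bar>w j\<bar>) \<le> sqrt \<delta> * sqrt n * 2"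
  proof -
    have "(\<Sum>j<n. \<bar>w j\<bar>) = (\<Sum>j\<in>B. \<bar>v j - lam\<bar>)" using wsum[of abs] by simp
    also have "\<dots> \<le> sqrt (real (card B)) * sqrt (\<Sum>j\<in>B. (v j - lam)\<^sup>2)" by (rule l1_l2)
    also have "\<dots> \<le> (sqrt \<delta> * sqrt n) * 2" using cBn sB d0 by (intro mult_mono) (auto intro: sum_nonneg)
    finally show ?thesis by simp
  qed
  have "(\<Sum>j<n. \<bar>w j\<bar>) * sqrt n / \<rho> \<le> (sqrt \<delta> * sqrt n * 2) * sqrt n / \<rho>"
    using wl1 r sn by (intro divide_right_mono mult_right_mono) auto
  also have "(sqrt \<delta> * sqrt n * 2) * sqrt n / \<rho> = 2 * sqrt \<delta> * real n / \<rho>"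
    by (simp add: mult_ac)
  finally have wL: "(\<Sum>j<n. \<bar>w j\<bar>) * sqrt n / \<rho> < real L + 1" using Lb by linarith
  obtain b where b: "b \<in> net n L \<rho>" and bw: "\<forall>j<n. \<bar>w j - b j\<bar> \<le> \<rho> / sqrt n"
    and b0: "\<forall>j<n. w j = 0 \<longrightarrow> b j = 0"
    using round_net[OF r(1) n0 wL] by blast
  have eb: "\<bar>v j - lam - b j\<bar> \<le> \<rho> / sqrt n" if j: "j < n" for j
  proof (cases "j \<in> B")
    case True then show ?thesis using bw j unfolding w_def by auto
  next
    case False
    then have "j \<in> G" "w j = 0" using j unfolding B_def w_def by auto
    then show ?thesis using Gb b0 j by auto
  qed
  have vG: "(\<Sum>j\<in>G. (v j)\<^sup>2) \<le> 25/256"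
  proof -
    have "(v j)\<^sup>2 \<le> (5/16 / sqrt n)\<^sup>2" if j: "j \<in> G" for j
    proof -
      have "\<bar>v j\<bar> \<le> \<bar>lam\<bar> + \<rho> / sqrt n" using Gb[OF j] by linarith
      also have "\<bar>lam\<bar> = (\<bar>lam\<bar> * sqrt n) / sqrt n" using sn by simp
      also have "(\<bar>lam\<bar> * sqrt n) / sqrt n + \<rho> / sqrt n \<le> 1/4 / sqrt n + 1/16 / sqrt n"
        using la r sn by (intro add_mono divide_right_mono) auto
      also have "1/4 / sqrt n + 1/16 / sqrt n = 5/16 / sqrt n" by (simp add: add_divide_distrib[symmetric])
      finally have "\<bar>v j\<bar> \<le> 5/16 / sqrt n" .
      then have "\<bar>v j\<bar>\<^sup>2 \<le> (5/16 / sqrt n)\<^sup>2" by (intro power_mono) auto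
      then show ?thesis by simp
    qed
    then have "(\<Sum>j\<in>G. (v j)\<^sup>2) \<le> (\<Sum>j\<in>G. (5/16 / sqrt n)\<^sup>2)" by (rule sum_mono)
    also have "\<dots> = real (card G) * (25/256) / real n" using n0 by (simp add: power_divide)
    also have "\<dots> \<le> real n * (25/256) / real n"
    proof -
      have "card G \<le> n" using card_mono[OF _ G] by simp
      then show ?thesis by (intro divide_right_mono mult_right_mono) auto
    qed
    also have "\<dots> = 25/256" using n0 by simp
    finally show ?thesis .
  qed
  have vB: "231/256 \<le> (\<Sum>j\<in>B. (v j)\<^sup>2)"
  proof -
    have "(\<Sum>j<n. (v j)\<^sup>2) = (\<Sum>j\<in>B. (v j)\<^sup>2) + (\<Sum>j\<in>G. (v j)\<^sup>2)"
      unfolding B_def using G by (metis (no_types, lifting) finite_lessThan sum.subset_diff)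
    then show ?thesis using vs vG by linarith
  qed
  have "94/100 \<le> sqrt (\<Sum>j\<in>B. (v j)\<^sup>2)"
  proof -
    have "sqrt ((94/100)\<^sup>2) \<le> sqrt (\<Sum>j\<in>B. (v j)\<^sup>2)" using vB by (intro real_sqrt_le_mono) (simp add: power2_eq_square)
    then show ?thesis by simp
  qed
  then have wn: "87/100 \<le> sqrt (\<Sum>j<n. (w j)\<^sup>2)"
    using Bpart(2)[OF fB, of v lam] lamB sd wsum[of "\<lambda>z. z\<^sup>2"] by simp
  have wb: "sqrt (\<Sum>j<n. (w j - b j)\<^sup>2) \<le> 1/64"
  proof -
    have "(\<Sum>j<n. (w j - b j)\<^sup>2) = (\<Sum>j\<in>B. (w j - b j)\<^sup>2) + (\<Sum>j\<in>G. (w j - b j)\<^sup>2)"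
      unfolding B_def using G by (metis (no_types, lifting) finite_lessThan sum.subset_diff)
    also have "(\<Sum>j\<in>G. (w j - b j)\<^sup>2) = 0"
    proof (rule sum.neutral, rule ballI)
      fix j assume j: "j \<in> G"
      then have "w j = 0" "j < n" using G unfolding w_def B_def by auto
      then show "(w j - b j)\<^sup>2 = 0" using b0 by simp
    qed
    also have "(\<Sum>j\<in>B. (w j - b j)\<^sup>2) \<le> (\<Sum>j\<in>B. (\<rho> / sqrt n)\<^sup>2)"
    proof (rule sum_mono)
      fix j assume "j \<in> B"
      then have "\<bar>w j - b j\<bar> \<le> \<rho> / sqrt n" using bw Bn by auto
      then have "\<bar>w j - b j\<bar>\<^sup>2 \<le> (\<rho> / sqrt n)\<^sup>2" by (intro power_mono) auto
      then show "(w j - b j)\<^sup>2 \<le> (\<rho> / sqrt n)\<^sup>2" by simp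
    qed
    also have "\<dots> = real (card B) * \<rho>\<^sup>2 / real n" using n0 by (simp add: power_divide)
    also have "\<dots> \<le> \<delta> * real n * \<rho>\<^sup>2 / real n"
      using cB unfolding B_def by (intro divide_right_mono mult_right_mono) auto
    also have "\<dots> = \<delta> * \<rho>\<^sup>2" using n0 by simp
    also have "\<dots> \<le> (1/64)\<^sup>2"
    proof -
      have "\<rho>\<^sup>2 \<le> (1/16)\<^sup>2" using r by (intro power_mono) auto
      then have "\<delta> * \<rho>\<^sup>2 \<le> 1/16 * (1/16)\<^sup>2" using d0 by (intro mult_mono) auto
      then show ?thesis by (simp add: power2_eq_square)
    qed
    finally have "(\<Sum>j<n. (w j - b j)\<^sup>2) \<le> (1/64)\<^sup>2" by simp
    then have "sqrt (\<Sum>j<n. (w j - b j)\<^sup>2) \<le> sqrt ((1/64)\<^sup>2)" by (rule real_sqrt_le_mono)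
    then show ?thesis by simp
  qed
  have tri: "sqrt (\<Sum>j<n. (w j)\<^sup>2) \<le> sqrt (\<Sum>j<n. (b j)\<^sup>2) + sqrt (\<Sum>j<n. (w j - b j)\<^sup>2)"
    using L2_set_triangle_ineq[of b "\<lambda>j. w j - b j" "{..<n}"] by (simp add: L2_set_def)
  have "1/2 \<le> sqrt (\<Sum>j<n. (b j)\<^sup>2)" using tri wn wb by linarith
  then have "1/4 \<le> (\<Sum>j<n. (b j)\<^sup>2)" by (rule sqrt_ge_half_sq) (simp add: sum_nonneg)
  then show ?thesis using b eb by blast
qed


lemma rows_in:
  assumes "M \<in> slice_matrices m n d" "i < m"
  shows "M i \<in> slice_vectors n d"
  using assms unfolding slice_matrices_def by auto

lemma caseB_final:
  assumes M: "M \<in> slice_matrices m n d" and dp: "real d = p * real n" and n0: "0 < n"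
    and eb: "\<And>j. j < n \<Longrightarrow> \<bar>v j - lam - b j\<bar> \<le> \<rho> / sqrt n"
    and l1b: "(\<Sum>j<n. \<bar>b j\<bar>) \<le> sqrt n / 2"
    and E1: "\<forall>\<sigma>\<in>Sig n. (\<Sum>i<m. \<bar>Yf n p \<sigma> (M i)\<bar>) < 20 * real m * sqrt n"
    and E2: "\<forall>t\<in>Tg \<kappa> n. 2 * \<kappa> * real m < (\<Sum>i<m. \<bar>(\<Sum>j<n. M i j * b j) - t\<bar>)"
    and k: "0 < \<kappa>" "\<kappa> \<le> 1/2" and r: "0 \<le> \<rho>"
  shows "\<kappa> * real m - 20 * \<rho> * real m \<le> (\<Sum>i<m. \<bar>\<Sum>j<n. M i j * v j\<bar>)"
proof -
  define e where "e j = v j - lam - b j" for j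
  define t0 where "t0 = - (lam * real d + p * (\<Sum>j<n. e j))"
  define a where "a i = (\<Sum>j<n. M i j * b j)" for i
  define r where "r i = (\<Sum>j<n. (M i j - p) * e j)" for i
  have sn: "0 < sqrt n" "1 \<le> sqrt n" using n0 by auto
  have ident: "(\<Sum>j<n. M i j * v j) = (a i - t0) + r i" if i: "i < m" for i
  proof -
    have x: "M i \<in> slice_vectors n d" by (rule rows_in[OF M i])
    have rs: "(\<Sum>j<n. M i j) = real d" by (rule slice_rowsum[OF x])
    have "(\<Sum>j<n. M i j * v j) = (\<Sum>j<n. lam * M i j + M i j * b j + ((M i j - p) * e j + p * e j))"
      unfolding e_def by (intro sum.cong refl) (simp add: algebra_simps)
    also have "\<dots> = lam * (\<Sum>j<n. M i j) + a i + (r i + p * (\<Sum>j<n. e j))"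
      unfolding a_def r_def by (simp add: sum.distrib sum_distrib_left)
    finally show ?thesis unfolding t0_def rs by simp
  qed
  have R: "(\<Sum>i<m. \<bar>r i\<bar>) \<le> 20 * \<rho> * real m"
  proof -
    obtain \<sigma> where s: "\<sigma> \<in> Sig n"
      and sb: "(\<Sum>i<m. \<bar>\<Sum>j<n. (M i j - p) * e j\<bar>) \<le> \<rho> / sqrt n * (\<Sum>i<m. \<bar>\<Sum>j<n. (M i j - p) * \<sigma> j\<bar>)"
      using sign_bound[where n = n and e = e and h = "\<rho> / sqrt n" and m = m and y = "\<lambda>i j. M i j - p"] eb unfolding e_def by blast
    have "(\<Sum>i<m. \<bar>\<Sum>j<n. (M i j - p) * \<sigma> j\<bar>) = (\<Sum>i<m. \<bar>Yf n p \<sigma> (M i)\<bar>)"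
      unfolding Yf_def by (simp add: mult.commute)
    also have "\<dots> \<le> 20 * real m * sqrt n" using E1 s by (simp add: less_imp_le)
    finally have "\<rho> / sqrt n * (\<Sum>i<m. \<bar>\<Sum>j<n. (M i j - p) * \<sigma> j\<bar>) \<le> \<rho> / sqrt n * (20 * real m * sqrt n)"
      using r sn by (intro mult_left_mono) auto
    also have "\<rho> / sqrt n * (20 * real m * sqrt n) = 20 * \<rho> * real m" using sn by simp
    finally show ?thesis using sb unfolding r_def by linarith
  qed
  have A: "\<kappa> * real m \<le> (\<Sum>i<m. \<bar>a i - t0\<bar>)"
  proof (cases "\<bar>t0\<bar> \<le> sqrt n")
    case True
    obtain t where t: "t \<in> Tg \<kappa> n" "\<bar>t - t0\<bar> \<le> \<kappa>" using Tg_approx[OF k(1) True] by blast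
    have "(\<Sum>i<m. \<bar>a i - t\<bar>) \<le> (\<Sum>i<m. \<bar>a i - t0\<bar> + \<kappa>)"
      by (intro sum_mono) (use t(2) in linarith)
    also have "\<dots> = (\<Sum>i<m. \<bar>a i - t0\<bar>) + \<kappa> * real m" by (simp add: sum.distrib)
    finally show ?thesis using E2 t(1) unfolding a_def by fastforce
  next
    case False
    have "\<kappa> \<le> \<bar>a i - t0\<bar>" if i: "i < m" for i
    proof -
      have x: "M i \<in> slice_vectors n d" by (rule rows_in[OF M i])
      have "\<bar>a i\<bar> \<le> (\<Sum>j<n. \<bar>M i j * b j\<bar>)" unfolding a_def by (rule sum_abs)
      also have "\<dots> \<le> (\<Sum>j<n. \<bar>b j\<bar>)"
      proof (rule sum_mono)
        fix j show "\<bar>M i j * b j\<bar> \<le> \<bar>b j\<bar>" using slice_vals[OF x, of j] by auto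
      qed
      finally have "\<bar>a i\<bar> \<le> sqrt n / 2" using l1b by linarith
      then show ?thesis using False k sn by linarith
    qed
    then have "(\<Sum>i<m. \<kappa>) \<le> (\<Sum>i<m. \<bar>a i - t0\<bar>)" by (intro sum_mono) auto
    then show ?thesis by (simp add: mult.commute)
  qed
  have "(\<Sum>i<m. \<bar>a i - t0\<bar>) - (\<Sum>i<m. \<bar>r i\<bar>) \<le> (\<Sum>i<m. \<bar>\<Sum>j<n. M i j * v j\<bar>)"
  proof -
    have "(\<Sum>i<m. \<bar>a i - t0\<bar> - \<bar>r i\<bar>) \<le> (\<Sum>i<m. \<bar>\<Sum>j<n. M i j * v j\<bar>)"
    proof (rule sum_mono)
      fix i assume "i \<in> {..<m}"
      then show "\<bar>a i - t0\<bar> - \<bar>r i\<bar> \<le> \<bar>\<Sum>j<n. M i j * v j\<bar>" using ident[of i] by auto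
    qed
    then show ?thesis by (simp add: sum_subtractf)
  qed
  then show ?thesis using A R by linarith
qed

lemma matvec_lower:
  assumes "0 < m"
  shows "(\<Sum>i<m. \<bar>\<Sum>j<n. M i j * v j\<bar>) / sqrt m \<le> matvec_norm m n M v"
proof -
  have "(\<Sum>i<m. \<bar>\<Sum>j<n. M i j * v j\<bar>) \<le> sqrt (real (card {..<m})) * sqrt (\<Sum>i<m. (\<Sum>j<n. M i j * v j)\<^sup>2)"
    by (rule l1_l2)
  then show ?thesis using assms unfolding matvec_norm_def by (simp add: divide_le_eq mult.commute)
qed

lemma matvec_row:
  assumes "i < m"
  shows "\<bar>\<Sum>j<n. M i j * v j\<bar> \<le> matvec_norm m n M v"
proof -
  have "(\<Sum>j<n. M i j * v j)\<^sup>2 \<le> (\<Sum>i<m. (\<Sum>j<n. M i j * v j)\<^sup>2)"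
    using assms by (intro member_le_sum) auto
  then have "sqrt ((\<Sum>j<n. M i j * v j)\<^sup>2) \<le> matvec_norm m n M v"
    unfolding matvec_norm_def by (rule real_sqrt_le_mono)
  then show ?thesis by simp
qed


definition qq :: "real \<Rightarrow> real" where "qq p = p * (1 - p)"
definition eta :: "real \<Rightarrow> real" where "eta p = (qq p)\<^sup>2 / 10^8"
definition tau :: "real \<Rightarrow> real" where "tau p = sqrt (qq p) / 4"
definition kap :: "real \<Rightarrow> real" where "kap p = eta p * tau p / 8"
definition rho :: "real \<Rightarrow> real" where "rho p = kap p / 40"
definition beta :: "real \<Rightarrow> real" where "beta p = (eta p)\<^sup>2 / 12288"
definition delta :: "real \<Rightarrow> real" where "delta p = (beta p * rho p / 2)\<^sup>2"
definition cc :: "real \<Rightarrow> real" where "cc p = kap p / 4"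

lemma const_facts:
  assumes p: "0 < p" "p \<le> 1/2"
  shows "0 < qq p" "qq p \<le> 1/4" "qq p \<le> p"
    and "0 < eta p" "eta p \<le> 1" "eta p \<le> p / 10^8"
    and "0 < tau p" "tau p \<le> 1/8"
    and "0 < kap p" "kap p \<le> eta p"
    and "0 < rho p" "rho p \<le> 1/16" "rho p \<le> p / 24"
    and "0 < beta p" "beta p \<le> 1"
    and "0 < delta p" "delta p \<le> 1/16" "sqrt (delta p) = beta p * rho p / 2"
proof -
  show q0: "0 < qq p" unfolding qq_def using p by simp
  have "0 \<le> (2 * p - 1)\<^sup>2" by (rule zero_le_power2)
  then show q4: "qq p \<le> 1/4" unfolding qq_def by (simp add: power2_eq_square algebra_simps)
  show qp: "qq p \<le> p" unfolding qq_def using p by (simp add: algebra_simps)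
  show e0: "0 < eta p" unfolding eta_def using q0 by simp
  have q2: "(qq p)\<^sup>2 \<le> qq p" using q0 q4 by (simp add: power2_eq_square mult_le_cancel_left1)
  show e1: "eta p \<le> p / 10^8" unfolding eta_def using q2 qp by (simp add: divide_right_mono)
  show "eta p \<le> 1" using e1 p by simp
  show t0: "0 < tau p" unfolding tau_def using q0 by simp
  have "sqrt (qq p) \<le> sqrt ((1/2)\<^sup>2)" using q4 by (intro real_sqrt_le_mono) (simp add: power2_eq_square)
  then show t1: "tau p \<le> 1/8" unfolding tau_def by simp
  show k0: "0 < kap p" unfolding kap_def using e0 t0 by simp
  show k1: "kap p \<le> eta p" unfolding kap_def using e0 t0 t1 by (simp add: mult_le_cancel_left1 field_simps)
  show r0: "0 < rho p" unfolding rho_def using k0 by simp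
  show r1: "rho p \<le> p / 24" unfolding rho_def using k1 e1 p by simp
  then show "rho p \<le> 1/16" using p by simp
  show b0: "0 < beta p" unfolding beta_def using e0 by simp
  have "(eta p)\<^sup>2 \<le> 1" using e1 e0 p by (simp add: power_le_one)
  then show b1: "beta p \<le> 1" unfolding beta_def by simp
  show "0 < delta p" unfolding delta_def using b0 r0 by simp
  have "beta p * rho p \<le> 1 * (1/16)" using b1 b0 r0 \<open>rho p \<le> 1/16\<close> by (intro mult_mono) auto
  then have br: "beta p * rho p / 2 \<le> 1/4" by simp
  then have "(beta p * rho p / 2)\<^sup>2 \<le> (1/4)\<^sup>2" using b0 r0 by (intro power_mono) auto
  then show "delta p \<le> 1/16" unfolding delta_def by (simp add: power2_eq_square)
  show "sqrt (delta p) = beta p * rho p / 2" unfolding delta_def using b0 r0 by simp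
qed


lemma det_main:
  assumes p: "0 < p" "p \<le> 1/2"
    and mn: "1 \<le> m" "m \<le> n" "real n \<le> 2 * real m" and dp: "real d = p * real n"
    and M: "M \<in> slice_matrices m n d"
    and v: "v \<in> almost_const (delta p) (rho p) n"
    and E1: "\<forall>\<sigma>\<in>Sig n. (\<Sum>i<m. \<bar>Yf n p \<sigma> (M i)\<bar>) < 20 * real m * sqrt n"
    and E2: "\<forall>b\<in>net n (nat \<lfloor>beta p * real n\<rfloor>) (rho p). 1/4 \<le> (\<Sum>j<n. (b j)\<^sup>2) \<longrightarrow>
              (\<forall>t\<in>Tg (kap p) n. 2 * kap p * real m < (\<Sum>i<m. \<bar>(\<Sum>j<n. M i j * b j) - t\<bar>))"
  shows "min (p * sqrt n / 8) (kap p * sqrt m / 2) \<le> matvec_norm m n M v"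
proof -
  note K = const_facts[OF p]
  let ?\<rho> = "rho p" and ?\<delta> = "delta p" and ?\<kappa> = "kap p" and ?L = "nat \<lfloor>beta p * real n\<rfloor>"
  have n0: "0 < n" using mn by simp
  have sn: "0 < sqrt n" using n0 by simp
  obtain lam where us: "v \<in> unit_sphere n"
    and cG0: "(1 - ?\<delta>) * real n \<le> real (card {i. i < n \<and> \<bar>v i - lam\<bar> \<le> ?\<rho> / sqrt (real n)})"
    using v unfolding almost_const_def by auto
  define G where "G = {i. i < n \<and> \<bar>v i - lam\<bar> \<le> ?\<rho> / sqrt (real n)}"
  have G: "G \<subseteq> {..<n}" unfolding G_def by auto
  have Gb: "\<And>j. j \<in> G \<Longrightarrow> \<bar>v j - lam\<bar> \<le> ?\<rho> / sqrt n" unfolding G_def by auto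
  have vs: "(\<Sum>j<n. (v j)\<^sup>2) = 1" using us unfolding unit_sphere_def by auto
  have cGn: "card G \<le> n" using card_mono[OF _ G] by simp
  have cB: "real (card ({..<n} - G)) \<le> ?\<delta> * real n"
  proof -
    have "card ({..<n} - G) = n - card G" using G by (simp add: card_Diff_subset finite_subset)
    then have "real (card ({..<n} - G)) = real n - real (card G)" using cGn by simp
    then show ?thesis using cG0 unfolding G_def by (simp add: algebra_simps)
  qed
  have cG: "real n / 2 \<le> real (card G)"
  proof -
    have "real n * ?\<delta> \<le> real n * (1/16)" using K(17) by (intro mult_left_mono) auto
    then have "real n / 2 \<le> (1 - ?\<delta>) * real n" by (simp add: algebra_simps)
    then show ?thesis using cG0 unfolding G_def by linarith
  qed
  show ?thesis
  proof (cases "1/4 \<le> \<bar>lam\<bar> * sqrt n")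
    case True
    have x: "M 0 \<in> slice_vectors n d" using rows_in[OF M] mn by simp
    have small: "p * ?\<rho> + 3 * sqrt ?\<delta> \<le> p / 8"
    proof -
      have "p * ?\<rho> \<le> p * (1/16)" using K p by (intro mult_left_mono) auto
      moreover have "3 * sqrt ?\<delta> \<le> p / 16"
      proof -
        have "sqrt ?\<delta> = beta p * ?\<rho> / 2" by (rule K(18))
        also have "\<dots> \<le> 1 * ?\<rho> / 2" using K by (intro divide_right_mono mult_right_mono) auto
        finally show ?thesis using K(13) by simp
      qed
      ultimately show ?thesis by simp
    qed
    have "p * sqrt n / 8 \<le> \<bar>\<Sum>j<n. M 0 j * v j\<bar>"
      by (rule caseA[OF x dp p(1) n0 vs G Gb cB _ cG _ _ True small]) (use K in auto)
    also have "\<dots> \<le> matvec_norm m n M v" by (rule matvec_row) (use mn in simp)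
    finally show ?thesis by simp
  next
    case False
    then have la: "\<bar>lam\<bar> * sqrt n < 1/4" by simp
    have Lb: "2 * sqrt ?\<delta> * real n / ?\<rho> < real ?L + 1"
    proof -
      have "2 * sqrt ?\<delta> * real n / ?\<rho> = beta p * real n" unfolding K(18) using K by simp
      moreover have "beta p * real n < real_of_int \<lfloor>beta p * real n\<rfloor> + 1" by linarith
      moreover have "real ?L = real_of_int \<lfloor>beta p * real n\<rfloor>" using K by simp
      ultimately show ?thesis by simp
    qed
    obtain b where b: "b \<in> net n ?L ?\<rho>" and b4: "1/4 \<le> (\<Sum>j<n. (b j)\<^sup>2)"
      and eb: "\<forall>j<n. \<bar>v j - lam - b j\<bar> \<le> ?\<rho> / sqrt n"
      using caseB_net[OF n0 vs G Gb cB _ _ _ _ la Lb] K by auto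
    have l1b: "(\<Sum>j<n. \<bar>b j\<bar>) \<le> sqrt n / 2"
    proof -
      have "(\<Sum>j<n. \<bar>b j\<bar>) \<le> ?\<rho> / sqrt n * real ?L" using net_l1[OF b] K by auto
      also have "real ?L \<le> beta p * real n" using K by simp
      then have "?\<rho> / sqrt n * real ?L \<le> ?\<rho> / sqrt n * (beta p * real n)" using K sn by (intro mult_left_mono) auto
      also have "?\<rho> / sqrt n * (beta p * real n) = (?\<rho> * beta p) * sqrt n"
        using sn by (simp add: field_simps)
      also have "\<dots> \<le> (1/2) * sqrt n"
      proof -
        have "?\<rho> * beta p \<le> 1/16 * 1" using K by (intro mult_mono) auto
        then show ?thesis using sn by (intro mult_right_mono) auto
      qed
      finally show ?thesis by simp
    qed
    have E2b: "\<forall>t\<in>Tg ?\<kappa> n. 2 * ?\<kappa> * real m < (\<Sum>i<m. \<bar>(\<Sum>j<n. M i j * b j) - t\<bar>)"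
      using E2 b b4 by blast
    have F: "?\<kappa> * real m - 20 * ?\<rho> * real m \<le> (\<Sum>i<m. \<bar>\<Sum>j<n. M i j * v j\<bar>)"
      by (rule caseB_final[OF M dp n0 _ l1b E1 E2b]) (use eb K p in auto)
    have "20 * ?\<rho> * real m = ?\<kappa> * real m / 2" unfolding rho_def by simp
    then have S: "?\<kappa> * real m / 2 \<le> (\<Sum>i<m. \<bar>\<Sum>j<n. M i j * v j\<bar>)" using F by linarith
    have "?\<kappa> * sqrt m / 2 = (?\<kappa> * real m / 2) / sqrt m"
      using mn by (simp add: field_simps)
    also have "\<dots> \<le> (\<Sum>i<m. \<bar>\<Sum>j<n. M i j * v j\<bar>) / sqrt m" using S mn by (intro divide_right_mono) auto
    also have "\<dots> \<le> matvec_norm m n M v" by (rule matvec_lower) (use mn in simp)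
    finally show ?thesis by simp
  qed
qed

lemma det_bound_gt:
  assumes p: "0 < p" "p \<le> 1/2" and mn: "1 \<le> m" "real n \<le> 2 * real m" "0 < n"
  shows "cc p * sqrt (p * real n) < min (p * sqrt n / 8) (kap p * sqrt m / 2)"
proof -
  note K = const_facts[OF p]
  have sp: "sqrt p < 1" using p by simp
  have sn: "0 < sqrt n" using mn by simp
  have ccs: "cc p * sqrt (p * real n) = kap p / 4 * sqrt p * sqrt n" unfolding cc_def by (simp add: real_sqrt_mult)
  have a1: "kap p / 4 * sqrt p * sqrt n < p * sqrt n / 8"
  proof -
    have "kap p / 4 * sqrt p \<le> kap p / 4" using K sp by (simp add: mult_left_le_one_le less_imp_le)
    also have "\<dots> < p / 8" using K p by simp
    finally show ?thesis using sn by (simp add: mult_strict_right_mono)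
  qed
  have a2: "kap p / 4 * sqrt p * sqrt n < kap p * sqrt m / 2"
  proof -
    have s2: "sqrt n \<le> sqrt 2 * sqrt m" using mn by (simp add: real_sqrt_mult[symmetric])
    have s3: "sqrt 2 * sqrt m \<le> 2 * sqrt m" using sqrt2_less_2 by (intro mult_right_mono) auto
    have "kap p / 4 * sqrt p * sqrt n < kap p / 4 * sqrt n"
      using K sp sn by (simp add: mult_strict_right_mono mult_strict_left_mono)
    also have "\<dots> \<le> kap p / 4 * (2 * sqrt m)" using K s2 s3 by (intro mult_left_mono) auto
    also have "\<dots> = kap p * sqrt m / 2" by simp
    finally show ?thesis .
  qed
  show ?thesis unfolding ccs using a1 a2 by simp
qed


lemma numeric_bound:
  assumes p: "0 < p" "p \<le> 1/2" and n0: "0 < n" and mn: "real n \<le> 2 * real m"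
    and N1: "32 / eta p \<le> real n" and N2: "10240 / ((eta p)\<^sup>2 * kap p) \<le> real n"
  shows "2 ^ n * exp (- 8 * real m)
       + real (card (net n (nat \<lfloor>beta p * real n\<rfloor>) (rho p))) * real (card (Tg (kap p) n)) * exp (- eta p * real m / 4)
     \<le> exp (- (eta p / 32) * real n)"
proof -
  note K = const_facts[OF p]
  define \<eta> where "\<eta> = eta p"
  define \<kappa> where "\<kappa> = kap p"
  define \<gamma> where "\<gamma> = \<eta> / 64"
  define L where "L = nat \<lfloor>beta p * real n\<rfloor>"
  have e0: "0 < \<eta>" "\<eta> \<le> 1" using K unfolding \<eta>_def by auto
  have k0: "0 < \<kappa>" "\<kappa> \<le> 1" using K unfolding \<kappa>_def \<eta>_def by auto
  have g0: "0 < \<gamma>" "\<gamma> \<le> 3" unfolding \<gamma>_def using e0 by auto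
  have Lb: "real L \<le> beta p * real n" unfolding L_def using K by simp
  have Ln: "L \<le> n"
  proof -
    have "beta p * real n \<le> 1 * real n" using K by (intro mult_right_mono) auto
    then have "real L \<le> real n" using Lb by linarith
    then show ?thesis by simp
  qed
  have R1: "2 ^ n * exp (- 8 * real m) \<le> exp (- 3 * real n)"
  proof -
    have "(2::real) ^ n \<le> exp 1 ^ n" using exp_ge_add_one_self[of "1::real"] by (intro power_mono) auto
    also have "exp 1 ^ n = exp (real n)" by (simp add: exp_of_nat_mult[symmetric])
    finally have "(2::real) ^ n \<le> exp (real n)" .
    moreover have "exp (- 8 * real m) \<le> exp (- 4 * real n)" using mn by simp
    ultimately have "2 ^ n * exp (- 8 * real m) \<le> exp (real n) * exp (- 4 * real n)"
      by (intro mult_mono) auto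
    also have "\<dots> = exp (- 3 * real n)" by (simp add: exp_add[symmetric])
    finally show ?thesis .
  qed
  have cn: "real (card (net n L (rho p))) \<le> exp (\<eta> * real n / 32)"
  proof -
    have "real (card (net n L (rho p))) \<le> (3 / \<gamma>) ^ L * exp (\<gamma> * real n)"
      by (rule card_net_exp[OF Ln g0 n0])
    also have "(3 / \<gamma>) ^ L \<le> exp (\<eta> * real n / 64)"
    proof -
      have g1: "1 \<le> 3 / \<gamma>" using g0 by simp
      have "exp (real L * ln (3 / \<gamma>)) = (3 / \<gamma>) ^ L"
        using g0 by (simp add: exp_of_nat_mult)
      then have "(3 / \<gamma>) ^ L = exp (real L * ln (3 / \<gamma>))" by simp
      also have "real L * ln (3 / \<gamma>) \<le> (beta p * real n) * (3 / \<gamma>)"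
      proof (rule mult_mono)
        have "0 < 3 / \<gamma>" using g0 by simp
        then show "ln (3 / \<gamma>) \<le> 3 / \<gamma>" using ln_less_self[of "3 / \<gamma>"] by linarith
        show "0 \<le> ln (3 / \<gamma>)" using g1 by simp
      qed (use Lb K in auto)
      also have "(beta p * real n) * (3 / \<gamma>) = \<eta> * real n / 64"
        unfolding beta_def \<gamma>_def \<eta>_def using e0 unfolding \<eta>_def by (simp add: power2_eq_square field_simps)
      finally show ?thesis by simp
    qed
    then have "(3 / \<gamma>) ^ L * exp (\<gamma> * real n) \<le> exp (\<eta> * real n / 64) * exp (\<gamma> * real n)"
      by (intro mult_right_mono) auto
    also have "\<dots> = exp (\<eta> * real n / 32)" unfolding \<gamma>_def by (simp add: exp_add[symmetric])
    finally show ?thesis .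
  qed
  have big: "1 \<le> \<eta> * real n / 32"
  proof -
    have "32 / \<eta> \<le> real n" using N1 unfolding \<eta>_def .
    then have "32 \<le> real n * \<eta>" using e0 by (simp add: divide_le_eq)
    then show ?thesis by (simp add: mult.commute)
  qed
  have ct: "real (card (Tg \<kappa> n)) \<le> exp (\<eta> * real n / 32)"
  proof -
    have "real (card (Tg \<kappa> n)) \<le> 2 * sqrt n / \<kappa> + 3" by (rule card_Tg[OF k0(1)])
    also have "\<dots> \<le> 5 * real n / \<kappa>"
    proof -
      have s1: "1 \<le> sqrt n" using n0 by simp
      have "sqrt n * 1 \<le> sqrt n * sqrt n" using s1 by (intro mult_left_mono) auto
      then have sq: "sqrt n \<le> real n" by simp
      have "2 * sqrt n / \<kappa> \<le> 2 * real n / \<kappa>" using sq k0 by (intro divide_right_mono) auto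
      moreover have "3 \<le> 3 * real n / \<kappa>"
      proof -
        have "3 * \<kappa> \<le> 3 * real n" using k0 n0 by linarith
        then show ?thesis using k0 by (simp add: le_divide_eq)
      qed
      ultimately show ?thesis by (simp add: add_divide_distrib[symmetric])
    qed
    also have "5 * real n / \<kappa> \<le> (\<eta> * real n / 32) ^ 2 / fact 2"
    proof -
      have "10240 / (\<eta>\<^sup>2 * \<kappa>) \<le> real n" using N2 unfolding \<eta>_def \<kappa>_def .
      then have a: "10240 \<le> real n * (\<eta>\<^sup>2 * \<kappa>)" using e0 k0 by (simp add: divide_le_eq)
      have "5 * real n / \<kappa> = 10240 * real n / (2048 * \<kappa>)" by simp
      also have "\<dots> \<le> (real n * (\<eta>\<^sup>2 * \<kappa>)) * real n / (2048 * \<kappa>)"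
        using a k0 n0 by (intro divide_right_mono mult_right_mono) auto
      also have "\<dots> = (\<eta> * real n / 32) ^ 2 / fact 2" using k0 by (simp add: power2_eq_square field_simps)
      finally show ?thesis .
    qed
    also have "\<dots> \<le> exp (\<eta> * real n / 32)" using e0 by (intro pow_fact_le_exp) simp
    finally show ?thesis .
  qed
  have em: "exp (- \<eta> * real m / 4) \<le> exp (- \<eta> * real n / 8)"
  proof -
    have "\<eta> * real n \<le> \<eta> * (2 * real m)" using mn e0 by (intro mult_left_mono) auto
    then show ?thesis by simp
  qed
  have R2: "real (card (net n L (rho p))) * real (card (Tg \<kappa> n)) * exp (- \<eta> * real m / 4) \<le> exp (- \<eta> * real n / 16)"
  proof -
    have "real (card (net n L (rho p))) * real (card (Tg \<kappa> n)) * exp (- \<eta> * real m / 4)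
        \<le> exp (\<eta> * real n / 32) * exp (\<eta> * real n / 32) * exp (- \<eta> * real n / 8)"
      using cn ct em by (intro mult_mono) auto
    also have "\<dots> = exp (- \<eta> * real n / 16)" by (simp add: exp_add[symmetric])
    finally show ?thesis .
  qed
  have R1': "exp (- 3 * real n) \<le> exp (- \<eta> * real n / 16)"
  proof -
    have "\<eta> * real n \<le> 1 * real n" using e0 by (intro mult_right_mono) auto
    then show ?thesis by simp
  qed
  have two: "2 \<le> exp (\<eta> * real n / 32)" using big exp_ge_add_one_self[of "\<eta> * real n / 32"] by linarith
  have "2 ^ n * exp (- 8 * real m)
       + real (card (net n L (rho p))) * real (card (Tg \<kappa> n)) * exp (- \<eta> * real m / 4)
      \<le> 2 * exp (- \<eta> * real n / 16)" using R1 R1' R2 by linarith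
  also have "\<dots> \<le> exp (\<eta> * real n / 32) * exp (- \<eta> * real n / 16)" using two by (intro mult_right_mono) auto
  also have "\<dots> = exp (- (\<eta> / 32) * real n)" by (simp add: exp_add[symmetric])
  finally show ?thesis unfolding \<eta>_def \<kappa>_def L_def .
qed


lemma cons_nonempty:
  assumes "0 < n" "0 \<le> \<delta>" "0 \<le> \<rho>"
  shows "almost_const \<delta> \<rho> n \<noteq> {}"
proof -
  define v0 where "v0 j = (if j < n then 1 / sqrt n else 0)" for j
  have "(\<Sum>j<n. (v0 j)\<^sup>2) = 1" unfolding v0_def using assms by (simp add: power_divide)
  then have us: "v0 \<in> unit_sphere n" unfolding unit_sphere_def v0_def by auto
  have "{i. i < n \<and> \<bar>v0 i - 1 / sqrt n\<bar> \<le> \<rho> / sqrt (real n)} = {..<n}"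
    unfolding v0_def using assms by auto
  then have "(1 - \<delta>) * real n \<le> real (card {i. i < n \<and> \<bar>v0 i - 1 / sqrt n\<bar> \<le> \<rho> / sqrt (real n)})"
    using assms by (simp add: mult_left_le_one_le)
  then have "v0 \<in> almost_const \<delta> \<rho> n" unfolding almost_const_def using us by blast
  then show ?thesis by blast
qed

theorem proposition3p1:
  fixes p :: real
  assumes "0 < p" and "p \<le> 1/2"
  shows "\<exists>C c \<delta> \<rho> :: real. 0 < C \<and> C < 1 \<and> 0 < c \<and> c < 1 \<and> 0 < \<delta> \<and> \<delta> < 1 \<and>
    0 < \<rho> \<and> \<rho> < 1 \<and>
    (\<exists>N0::nat. \<forall>n d m :: nat. N0 \<le> n \<longrightarrow> N0 \<le> d \<longrightarrow> real d = p * real n \<longrightarrow>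
       real n / 2 \<le> real m \<longrightarrow> m \<le> n \<longrightarrow>
       measure_pmf.prob (random_slice_matrix m n d)
         {M. (INF v\<in>almost_const \<delta> \<rho> n. matvec_norm m n M v) \<le> c * sqrt (p * real n)}
       \<le> exp (- C * real n))"
proof -
  have p: "0 < p" "p \<le> 1/2" using assms by auto
  note K = const_facts[OF p]
  define N0 :: nat where "N0 = max 2 (max (nat \<lceil>32 / eta p\<rceil>) (nat \<lceil>10240 / ((eta p)\<^sup>2 * kap p)\<rceil>))"
  have main: "measure_pmf.prob (random_slice_matrix m n d)
         {M. (INF v\<in>almost_const (delta p) (rho p) n. matvec_norm m n M v) \<le> cc p * sqrt (p * real n)}
       \<le> exp (- (eta p / 32) * real n)"
    if nN: "N0 \<le> n" and dN: "N0 \<le> d" and dp: "real d = p * real n" and mh: "real n / 2 \<le> real m" and mn: "m \<le> n"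
    for n d m
  proof -
    have d2: "2 \<le> d" using dN unfolding N0_def by simp
    have n2: "2 \<le> n" using nN unfolding N0_def by simp
    have n0: "0 < n" using n2 by simp
    have dn: "d < n"
    proof -
      have "p * real n \<le> 1/2 * real n" using p by (intro mult_right_mono) auto
      then have "real d \<le> real n / 2" using dp by simp
      then show ?thesis using n2 by simp
    qed
    have pd: "p = real d / real n" using dp n0 by simp
    have m1: "1 \<le> m" using mh n2 by simp
    have mn2: "real n \<le> 2 * real m" using mh by simp
    have N1: "32 / eta p \<le> real n"
    proof -
      have "nat \<lceil>32 / eta p\<rceil> \<le> n" using nN unfolding N0_def by simp
      then show ?thesis by linarith
    qed
    have N2: "10240 / ((eta p)\<^sup>2 * kap p) \<le> real n"
    proof -
      have "nat \<lceil>10240 / ((eta p)\<^sup>2 * kap p)\<rceil> \<le> n" using nN unfolding N0_def by simp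
      then show ?thesis by linarith
    qed
    define SM where "SM = slice_matrices m n d"
    define L where "L = nat \<lfloor>beta p * real n\<rfloor>"
    define Ev where "Ev = {M. (INF v\<in>almost_const (delta p) (rho p) n. matvec_norm m n M v) \<le> cc p * sqrt (p * real n)}"
    define Bad1 where "Bad1 = (\<Union>\<sigma>\<in>Sig n. {M \<in> SM. 20 * real m * sqrt n \<le> (\<Sum>i<m. \<bar>Yf n (real d / real n) \<sigma> (M i)\<bar>)})"
    define Net' where "Net' = {b \<in> net n L (rho p). 1/4 \<le> (\<Sum>j<n. (b j)\<^sup>2)}"
    define Bad2 where "Bad2 = (\<Union>b\<in>Net'. \<Union>t\<in>Tg (kap p) n. {M \<in> SM. (\<Sum>i<m. \<bar>(\<Sum>j<n. M i j * b j) - t\<bar>) \<le> 2 * kap p * real m})"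
    have fSM: "finite SM" unfolding SM_def by (rule finite_slice_matrices)
    have neSM: "SM \<noteq> {}"
    proof -
      have "card SM = (n choose d) ^ m" unfolding SM_def by (rule card_slice_matrices)
      moreover have "(n choose d) ^ m \<noteq> 0" using dn by simp
      ultimately show ?thesis by auto
    qed
    have cSM: "0 < real (card SM)" using fSM neSM by (simp add: card_gt_0_iff)
    have prob: "measure_pmf.prob (random_slice_matrix m n d) Ev = real (card (SM \<inter> Ev)) / real (card SM)"
      unfolding random_slice_matrix_def SM_def[symmetric] using measure_pmf_of_set[OF neSM fSM] by simp
    have sub: "SM \<inter> Ev \<subseteq> Bad1 \<union> Bad2"
    proof
      fix M assume ME: "M \<in> SM \<inter> Ev"
      show "M \<in> Bad1 \<union> Bad2"
      proof (rule ccontr)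
        assume nb: "M \<notin> Bad1 \<union> Bad2"
        have MS: "M \<in> slice_matrices m n d" using ME unfolding SM_def by simp
        have E1: "\<forall>\<sigma>\<in>Sig n. (\<Sum>i<m. \<bar>Yf n p \<sigma> (M i)\<bar>) < 20 * real m * sqrt n"
          using nb ME unfolding Bad1_def pd by (auto simp: not_le)
        have E2: "\<forall>b\<in>net n (nat \<lfloor>beta p * real n\<rfloor>) (rho p). 1/4 \<le> (\<Sum>j<n. (b j)\<^sup>2) \<longrightarrow>
              (\<forall>t\<in>Tg (kap p) n. 2 * kap p * real m < (\<Sum>i<m. \<bar>(\<Sum>j<n. M i j * b j) - t\<bar>))"
          using nb ME unfolding Bad2_def Net'_def L_def by (auto simp: not_le)
        have low: "min (p * sqrt n / 8) (kap p * sqrt m / 2) \<le> matvec_norm m n M v"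
          if v: "v \<in> almost_const (delta p) (rho p) n" for v
          by (rule det_main[OF p m1 mn mn2 dp MS v E1 E2])
        have "min (p * sqrt n / 8) (kap p * sqrt m / 2) \<le> (INF v\<in>almost_const (delta p) (rho p) n. matvec_norm m n M v)"
          using cons_nonempty[of n "delta p" "rho p"] n0 K low by (intro cINF_greatest) auto
        moreover have "cc p * sqrt (p * real n) < min (p * sqrt n / 8) (kap p * sqrt m / 2)"
          by (rule det_bound_gt[OF p m1 mn2 n0])
        ultimately have "cc p * sqrt (p * real n) < (INF v\<in>almost_const (delta p) (rho p) n. matvec_norm m n M v)"
          by linarith
        moreover have "(INF v\<in>almost_const (delta p) (rho p) n. matvec_norm m n M v) \<le> cc p * sqrt (p * real n)"
          using ME unfolding Ev_def by simp
        ultimately show False by linarith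
      qed
    qed
    have fin1: "finite Bad1" unfolding Bad1_def using fSM finite_Sig by auto
    have fin2: "finite Bad2" unfolding Bad2_def Net'_def using fSM finite_net finite_Tg by auto
    have "real (card (SM \<inter> Ev)) \<le> real (card (Bad1 \<union> Bad2))"
      using sub fin1 fin2 by (simp add: card_mono)
    also have "\<dots> \<le> real (card Bad1) + real (card Bad2)"
      using card_Un_le[of Bad1 Bad2] by linarith
    also have "real (card Bad1) \<le> 2 ^ n * exp (- 8 * real m) * real (card SM)"
    proof -
      have "real (card Bad1) \<le> (\<Sum>\<sigma>\<in>Sig n. real (card {M \<in> SM. 20 * real m * sqrt n \<le> (\<Sum>i<m. \<bar>Yf n (real d / real n) \<sigma> (M i)\<bar>)}))"
        unfolding Bad1_def using card_UN_le[OF finite_Sig, of "\<lambda>\<sigma>. {M \<in> SM. 20 * real m * sqrt n \<le> (\<Sum>i<m. \<bar>Yf n (real d / real n) \<sigma> (M i)\<bar>)}" n]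
        by (simp only: of_nat_sum[symmetric] of_nat_le_iff)
      also have "\<dots> \<le> (\<Sum>\<sigma>\<in>Sig n. exp (- 8 * real m) * real (card SM))"
        using event1[of d n] d2 dn n0 unfolding SM_def by (intro sum_mono) auto
      also have "\<dots> = 2 ^ n * exp (- 8 * real m) * real (card SM)" by (simp add: card_Sig)
      finally show ?thesis .
    qed
    also have "real (card Bad2) \<le> real (card (net n L (rho p))) * real (card (Tg (kap p) n)) * exp (- eta p * real m / 4) * real (card SM)"
    proof -
      have ev2: "real (card {M \<in> SM. (\<Sum>i<m. \<bar>(\<Sum>j<n. M i j * b j) - t\<bar>) \<le> 2 * kap p * real m})
          \<le> exp (- eta p * real m / 4) * real (card SM)" if b: "b \<in> Net'" for b t
      proof -
        have bn: "b \<in> net n L (rho p)" and s2: "1/4 \<le> (\<Sum>j<n. (b j)\<^sup>2)" using b unfolding Net'_def by auto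
        have l1: "(\<Sum>j<n. \<bar>b j\<bar>)\<^sup>2 \<le> real n / 64"
        proof -
          have sn: "0 < sqrt n" using n0 by simp
          have "(\<Sum>j<n. \<bar>b j\<bar>) \<le> rho p / sqrt n * real L" using net_l1[OF bn] K by auto
          also have "\<dots> \<le> rho p / sqrt n * (beta p * real n)"
          proof -
            have "real L \<le> beta p * real n" unfolding L_def using K by simp
            moreover have "0 \<le> rho p / sqrt n" using K sn by simp
            ultimately show ?thesis by (rule mult_left_mono)
          qed
          also have "\<dots> = (rho p * beta p) * sqrt n" using sn by (simp add: field_simps)
          also have "\<dots> \<le> (1/8) * sqrt n"
          proof -
            have "rho p * beta p \<le> 1/16 * 1" using K by (intro mult_mono) auto
            then show ?thesis using sn by (intro mult_right_mono) auto
          qed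
          finally have "(\<Sum>j<n. \<bar>b j\<bar>) \<le> 1/8 * sqrt n" .
          moreover have "0 \<le> (\<Sum>j<n. \<bar>b j\<bar>)" by (simp add: sum_nonneg)
          ultimately have "(\<Sum>j<n. \<bar>b j\<bar>)\<^sup>2 \<le> (1/8 * sqrt n)\<^sup>2" by (rule power_mono)
          moreover have "(1/8 * sqrt n)\<^sup>2 = real n / 64" by (simp add: power_mult_distrib power_divide)
          ultimately show ?thesis by linarith
        qed
        have eq: "2 * kap p * real m = 2 * ((real d / real n * (1 - real d / real n))\<^sup>2 / 10^8 * (sqrt (real d / real n * (1 - real d / real n)) / 4) / 8) * real m"
          unfolding kap_def eta_def tau_def qq_def pd[symmetric] ..
        have eq2: "eta p = (real d / real n * (1 - real d / real n))\<^sup>2 / 10^8"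
          unfolding eta_def qq_def pd[symmetric] ..
        show ?thesis
          using event2[OF d2 dn s2 l1, of m t] unfolding SM_def eq eq2[symmetric] by simp
      qed
      have "real (card Bad2) \<le> (\<Sum>b\<in>Net'. real (card (\<Union>t\<in>Tg (kap p) n. {M \<in> SM. (\<Sum>i<m. \<bar>(\<Sum>j<n. M i j * b j) - t\<bar>) \<le> 2 * kap p * real m})))"
        unfolding Bad2_def using card_UN_le[of Net'] finite_net unfolding Net'_def
        by (simp only: of_nat_sum[symmetric] of_nat_le_iff) (rule card_UN_le, simp)
      also have "\<dots> \<le> (\<Sum>b\<in>Net'. \<Sum>t\<in>Tg (kap p) n. real (card {M \<in> SM. (\<Sum>i<m. \<bar>(\<Sum>j<n. M i j * b j) - t\<bar>) \<le> 2 * kap p * real m}))"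
      proof (rule sum_mono)
        fix b
        show "real (card (\<Union>t\<in>Tg (kap p) n. {M \<in> SM. (\<Sum>i<m. \<bar>(\<Sum>j<n. M i j * b j) - t\<bar>) \<le> 2 * kap p * real m}))
            \<le> (\<Sum>t\<in>Tg (kap p) n. real (card {M \<in> SM. (\<Sum>i<m. \<bar>(\<Sum>j<n. M i j * b j) - t\<bar>) \<le> 2 * kap p * real m}))"
          using card_UN_le[OF finite_Tg] by (simp only: of_nat_sum[symmetric] of_nat_le_iff)
      qed
      also have "\<dots> \<le> (\<Sum>b\<in>Net'. \<Sum>t\<in>Tg (kap p) n. exp (- eta p * real m / 4) * real (card SM))"
        using ev2 by (intro sum_mono) auto
      also have "\<dots> = real (card Net') * real (card (Tg (kap p) n)) * exp (- eta p * real m / 4) * real (card SM)"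
        by simp
      also have "\<dots> \<le> real (card (net n L (rho p))) * real (card (Tg (kap p) n)) * exp (- eta p * real m / 4) * real (card SM)"
      proof -
        have "card Net' \<le> card (net n L (rho p))" unfolding Net'_def by (rule card_mono[OF finite_net]) auto
        then show ?thesis by (intro mult_right_mono) auto
      qed
      finally show ?thesis .
    qed
    finally have "real (card (SM \<inter> Ev)) \<le> (2 ^ n * exp (- 8 * real m)
       + real (card (net n L (rho p))) * real (card (Tg (kap p) n)) * exp (- eta p * real m / 4)) * real (card SM)"
      by (simp add: algebra_simps)
    also have "\<dots> \<le> exp (- (eta p / 32) * real n) * real (card SM)"
      using numeric_bound[OF p n0 mn2 N1 N2] cSM unfolding L_def by (intro mult_right_mono) auto
    finally have "real (card (SM \<inter> Ev)) / real (card SM) \<le> exp (- (eta p / 32) * real n)"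
      using cSM by (simp add: divide_le_eq)
    then show ?thesis using prob unfolding Ev_def by simp
  qed
  show ?thesis
  proof (rule exI[of _ "eta p / 32"], rule exI[of _ "cc p"], rule exI[of _ "delta p"], rule exI[of _ "rho p"],
      intro conjI exI[of _ N0] allI impI)
    show "0 < eta p / 32" "eta p / 32 < 1" using K p by auto
    show "0 < cc p" "cc p < 1" unfolding cc_def using K p by auto
    show "0 < delta p" "delta p < 1" "0 < rho p" "rho p < 1" using K by auto
  next
    fix n d m :: nat
    assume "N0 \<le> n" "N0 \<le> d" "real d = p * real n" "real n / 2 \<le> real m" "m \<le> n"
    then show "measure_pmf.prob (random_slice_matrix m n d)
         {M. (INF v\<in>almost_const (delta p) (rho p) n. matvec_norm m n M v) \<le> cc p * sqrt (p * real n)}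
       \<le> exp (- (eta p / 32) * real n)" by (rule main)
  qed
qed


end
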